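(* Fix $\gamma\in[K]$. Suppose consistency holds, the valid index set satisfies $|\nu^*|\ge\gamma$, and there exists a function $q'(Z,A,X)$ with $(-1)^{1-A}q'(Z,A,X)\in\mathbb{H}_\gamma$ and $$\mathbb{E}\{q'(Z,A,X)\mid U,A,Z_{-\nu^*},X\}=\frac{1}{\mathbb{P}(A\mid U,Z_{-\nu^*},X)}\ \text{a.s.}$$ Then $\tau^*=\mathbb{E}\{q'(Z,1,X)AY-q'(Z,0,X)(1-A)Y\}$ and $\mathbb{E}\{q'(Z,A,X)\mid W,A,X\}=1/\mathbb{P}(A\mid W,X)$ a.s. Furthermore, suppose that for every $g\in\mathbb{H}_\gamma$, $\mathbb{E}\{h(W,A,X)g(Z,A,X)\}=0$ for all $h\in L_2(W,A,X)$ if and only if $g=0$ a.s. Then any function $q$ with $(-1)^{1-A}q\in\mathbb{H}_\gamma$ and $\mathbb{E}\{q(Z,A,X)\mid W,A,X\}=1/\mathbb{P}(A\mid W,X)$ equals $q'$ almost surely; consequently $\tau^*=\mathbb{E}\{q(Z,1,X)AY-q(Z,0,X)(1-A)Y\}$ for any such $q$.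
   Context: Setting: $(Y,A,Z,W,X,U)$ is a random vector with $Y\in\mathbb{R}$ an outcome, $A\in\{0,1\}$ a treatment, $Z=(Z_1,\dots,Z_K)$ candidate treatment confounding proxies, $W$ an outcome confounding proxy, $X$ measured covariates, and $U$ unobserved confounders; $Y(a)$, $a\in\{0,1\}$, are potential outcomes and $\tau^*=\mathbb{E}\{Y(1)-Y(0)\}$. Consistency means $Y=Y(a)$ almost surely when $A=a$. $[K]=\{1,\dots,K\}$; for $\nu\subseteq[K]$, $Z_\nu=(Z_j:j\in\nu)$ and $Z_{-\nu}=(Z_j:j\notin\nu)$; $\mathcal{P}_t([K])$ is the set of subsets of $[K]$ of cardinality $t$. $L_2(V)$ denotes square-integrable functions of $V$. A subset $\nu^*\subseteq[K]$ is the set of indices of valid treatment confounding proxies if for $a\in\{0,1\}$: (i) $A\perp\!\!\!\perp Y(a)\mid U,Z_{-\nu^*},X$; (ii) $0<\mathbb{P}(A=a\mid U,Z_{-\nu^*},X)<1$ a.s.; (iii) $Z_{\nu^*}\perp\!\!\!\perp Y\mid U,A,Z_{-\nu^*},X$ and $W\perp\!\!\!\perp (Z_{\nu^*},A)\mid U,Z_{-\nu^*},X$. Define $\mathbb{H}_\gamma=\{d\in L_2(Z,A,X):\mathbb{E}\{d(Z,A,X)\mid Z_{-\nu},X\}=0\ \forall\nu\in\mathcal{P}_\gamma([K])\}$. *)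

theory Defs
  imports "HOL-Probability.Probability"
begin

definition ev :: "'w measure \<Rightarrow> ('w \<Rightarrow> 'b) \<Rightarrow> 'b measure \<Rightarrow> 'w set set" where
  "ev M V N = {V -` B \<inter> space M | B. B \<in> sets N}"

definition Zev :: "'w measure \<Rightarrow> ('w \<Rightarrow> nat \<Rightarrow> 'z) \<Rightarrow> 'z measure \<Rightarrow> nat set \<Rightarrow> 'w set set" where
  "Zev M Z MZ J = (\<Union>j\<in>J. ev M (\<lambda>\<omega>. Z \<omega> j) MZ)"

definition gen :: "'w measure \<Rightarrow> 'w set set \<Rightarrow> 'w measure" where
  "gen M S = sigma (space M) S"

definition cprob :: "'w measure \<Rightarrow> 'w measure \<Rightarrow> 'w set \<Rightarrow> 'w \<Rightarrow> real" where
  "cprob M F E = real_cond_exp M F (indicator E)"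

definition cond_indep :: "'w measure \<Rightarrow> 'w measure \<Rightarrow> 'w set set \<Rightarrow> 'w set set \<Rightarrow> bool" where
  "cond_indep M F S1 S2 \<longleftrightarrow>
     (\<forall>E1\<in>sigma_sets (space M) S1. \<forall>E2\<in>sigma_sets (space M) S2.
        AE \<omega> in M. cprob M F (E1 \<inter> E2) \<omega> = cprob M F E1 \<omega> * cprob M F E2 \<omega>)"

text \<open>P(A | F) evaluated at the observed treatment: P(A = a | F)(w) with a = A w.\<close>
definition propA :: "'w measure \<Rightarrow> 'w measure \<Rightarrow> ('w \<Rightarrow> real) \<Rightarrow> 'w \<Rightarrow> real" where
  "propA M F A \<omega> = cprob M F {x \<in> space M. A x = A \<omega>} \<omega>"

definition signA :: "real \<Rightarrow> real" where
  "signA a = (if a = 1 then 1 else - 1)"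

definition L2fun :: "'w measure \<Rightarrow> ('w \<Rightarrow> 'v) \<Rightarrow> 'v measure \<Rightarrow> ('v \<Rightarrow> real) set" where
  "L2fun M V N = {d. d \<in> borel_measurable N \<and> integrable M (\<lambda>\<omega>. (d (V \<omega>))\<^sup>2)}"

abbreviation MZK :: "'z measure \<Rightarrow> nat \<Rightarrow> (nat \<Rightarrow> 'z) measure" where
  "MZK MZ K \<equiv> PiM {1..K} (\<lambda>_. MZ)"

definition F_UZX where
  "F_UZX M U MU Z MZ K \<nu> X MX =
     gen M (ev M U MU \<union> Zev M Z MZ ({1..K} - \<nu>) \<union> ev M X MX)"

definition F_UAZX where
  "F_UAZX M U MU A Z MZ K \<nu> X MX =
     gen M (ev M U MU \<union> ev M A borel \<union> Zev M Z MZ ({1..K} - \<nu>) \<union> ev M X MX)"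

definition Hgam :: "'w measure \<Rightarrow> ('w \<Rightarrow> nat \<Rightarrow> 'z) \<Rightarrow> 'z measure \<Rightarrow> nat \<Rightarrow> ('w \<Rightarrow> real)
     \<Rightarrow> ('w \<Rightarrow> 'x) \<Rightarrow> 'x measure \<Rightarrow> nat \<Rightarrow> ((nat \<Rightarrow> 'z) \<times> real \<times> 'x \<Rightarrow> real) set" where
  "Hgam M Z MZ K A X MX \<gamma> =
     {d \<in> L2fun M (\<lambda>\<omega>. (Z \<omega>, A \<omega>, X \<omega>)) (MZK MZ K \<Otimes>\<^sub>M (borel \<Otimes>\<^sub>M MX)).
        \<forall>\<nu>. \<nu> \<subseteq> {1..K} \<and> card \<nu> = \<gamma> \<longrightarrow>
          (AE \<omega> in M. real_cond_exp M (gen M (Zev M Z MZ ({1..K} - \<nu>) \<union> ev M X MX))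
                          (\<lambda>\<omega>. d (Z \<omega>, A \<omega>, X \<omega>)) \<omega> = 0)}"

definition valid_proxies where
  "valid_proxies M Y0 Y1 Y A Z MZ K W MW X MX U MU \<nu> \<longleftrightarrow>
     \<nu> \<subseteq> {1..K} \<and>
     cond_indep M (F_UZX M U MU Z MZ K \<nu> X MX) (ev M A borel) (ev M Y0 borel) \<and>
     cond_indep M (F_UZX M U MU Z MZ K \<nu> X MX) (ev M A borel) (ev M Y1 borel) \<and>
     (\<forall>a\<in>{0::real,1}. AE \<omega> in M.
        0 < cprob M (F_UZX M U MU Z MZ K \<nu> X MX) {x \<in> space M. A x = a} \<omega> \<and>
        cprob M (F_UZX M U MU Z MZ K \<nu> X MX) {x \<in> space M. A x = a} \<omega> < 1) \<and>
     cond_indep M (F_UAZX M U MU A Z MZ K \<nu> X MX) (Zev M Z MZ \<nu>) (ev M Y borel) \<and>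
     cond_indep M (F_UZX M U MU Z MZ K \<nu> X MX) (ev M W MW) (Zev M Z MZ \<nu> \<union> ev M A borel)"

end

theory Submission
  imports Defs
begin

context prob_space begin

lemma sfs: "subalgebra M F \<Longrightarrow> sigma_finite_subalgebra M F"
  by (rule finite_measure_subalgebra_is_sigma_finite) (simp add: finite_measure_subalgebra_def finite_measure_subalgebra_axioms_def finite_measure_axioms)

lemma set_int_eq_sigma:
  fixes f g :: "'a \<Rightarrow> real"
  assumes Is: "Int_stable E" and Es: "E \<subseteq> sets M" and f: "integrable M f" and g: "integrable M g"
    and tot: "(\<integral>x. f x \<partial>M) = (\<integral>x. g x \<partial>M)"
    and bas: "\<And>D. D \<in> E \<Longrightarrow> (LINT x:D|M. f x) = (LINT x:D|M. g x)"
    and D: "D \<in> sigma_sets (space M) E"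
  shows "(LINT x:D|M. f x) = (LINT x:D|M. g x)"
proof -
  have EP: "E \<subseteq> Pow (space M)" using Es sets.sets_into_space by blast
  have ss: "sigma_sets (space M) E \<subseteq> sets M" using Es by (rule sets.sigma_sets_subset)
  have cmpl: "(LINT x:(space M - A)|M. h x) = (\<integral>x. h x \<partial>M) - (LINT x:A|M. h x)"
    if "A \<in> sets M" "integrable M h" for A and h :: "'a \<Rightarrow> real"
  proof -
    have "(LINT x:(space M - A)|M. h x) = (\<integral>x. h x - indicator A x * h x \<partial>M)"
      unfolding set_lebesgue_integral_def
      by (rule Bochner_Integration.integral_cong) (auto simp: indicator_def)
    also have "\<dots> = (\<integral>x. h x \<partial>M) - (\<integral>x. indicator A x * h x \<partial>M)"
      using that by (intro Bochner_Integration.integral_diff) (auto intro: integrable_mult_indicator[of A M h, simplified])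
    finally show ?thesis unfolding set_lebesgue_integral_def by simp
  qed
  show ?thesis using Is EP D
  proof (induction rule: sigma_sets_induct_disjoint)
    case (basic A) then show ?case by (rule bas)
  next
    case empty then show ?case by (simp add: set_lebesgue_integral_def)
  next
    case (compl A)
    then have "A \<in> sets M" using ss by blast
    then show ?case using compl.IH tot cmpl[OF _ f] cmpl[OF _ g] by simp
  next
    case (union A)
    then have As: "\<And>i. A i \<in> sets M" using ss by blast
    have dj: "\<And>i j. i \<noteq> j \<Longrightarrow> A i \<inter> A j = {}" using union(1) by (auto simp: disjoint_family_on_def)
    have U: "(\<Union>i. A i) \<in> sets M" using As by blast
    have "(LINT x:(\<Union>i. A i)|M. f x) = (\<Sum>i. (LINT x:(A i)|M. f x))"
      by (rule lebesgue_integral_countable_add[OF As])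
         (use dj integrable_mult_indicator[OF U f] in \<open>auto simp: set_integrable_def\<close>)
    moreover have "(LINT x:(\<Union>i. A i)|M. g x) = (\<Sum>i. (LINT x:(A i)|M. g x))"
      by (rule lebesgue_integral_countable_add[OF As])
         (use dj integrable_mult_indicator[OF U g] in \<open>auto simp: set_integrable_def\<close>)
    ultimately show ?case using union(3) by simp
  qed
qed

lemma space_gen[simp]: "space (gen M S) = space M"
  unfolding gen_def by (simp add: space_measure_of_conv)

lemma sets_gen: "S \<subseteq> Pow (space M) \<Longrightarrow> sets (gen M S) = sigma_sets (space M) S"
  unfolding gen_def by (simp add: sets_measure_of)

lemma sub_gen: "S \<subseteq> sets M \<Longrightarrow> subalgebra M (gen M S)"
  unfolding subalgebra_def using sets_gen[of S] sets.sets_into_space sets.sigma_sets_subset[of S]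
  by (metis Pow_iff space_gen subsetI subset_trans)

lemma ind_int[simp, intro]: "A \<in> sets M \<Longrightarrow> integrable M (indicator A :: 'a \<Rightarrow> real)"
  by (rule integrable_real_indicator) (auto simp: emeasure_eq_measure)

lemma integrable_dom:
  fixes f g :: "'a \<Rightarrow> real"
  shows "integrable M f \<Longrightarrow> g \<in> borel_measurable M \<Longrightarrow> (\<And>x. x \<in> space M \<Longrightarrow> \<bar>g x\<bar> \<le> \<bar>f x\<bar>) \<Longrightarrow> integrable M g"
  by (rule Bochner_Integration.integrable_bound[of M f g]) auto

lemma integrable_dom_AE:
  fixes f g :: "'a \<Rightarrow> real"
  shows "integrable M f \<Longrightarrow> g \<in> borel_measurable M \<Longrightarrow> (AE x in M. \<bar>g x\<bar> \<le> \<bar>f x\<bar>) \<Longrightarrow> integrable M g"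
  by (rule Bochner_Integration.integrable_bound[of M f g]) auto

lemma integrable_ind_mult:
  fixes f :: "'a \<Rightarrow> real"
  shows "integrable M f \<Longrightarrow> A \<in> sets M \<Longrightarrow> integrable M (\<lambda>x. indicator A x * f x)"
  using integrable_mult_indicator[of A M f] by simp

lemma integrable_mult_ind:
  fixes f :: "'a \<Rightarrow> real"
  shows "integrable M f \<Longrightarrow> A \<in> sets M \<Longrightarrow> integrable M (\<lambda>x. f x * indicator A x)"
  using integrable_mult_indicator[of A M f] by (simp add: mult.commute)

lemma cprob_meas[measurable]: "cprob M G D \<in> borel_measurable G"
  unfolding cprob_def by simp

lemma cprob_measM[measurable]: "cprob M G D \<in> borel_measurable M"
  unfolding cprob_def by simp

lemma cprob_int: "subalgebra M G \<Longrightarrow> D \<in> sets M \<Longrightarrow> integrable M (cprob M G D)"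
  unfolding cprob_def
  using sigma_finite_subalgebra.real_cond_exp_int(1)[OF sfs] by auto

lemma cprob_bounds: "subalgebra M G \<Longrightarrow> D \<in> sets M \<Longrightarrow> AE x in M. 0 \<le> cprob M G D x \<and> cprob M G D x \<le> 1"
proof -
  assume G: "subalgebra M G" and D: "D \<in> sets M"
  interpret sigma_finite_subalgebra M G by (rule sfs[OF G])
  have "AE x in M. 0 \<le> real_cond_exp M G (indicator D) x"
    by (rule real_cond_exp_pos) (auto simp: D intro: borel_measurable_indicator)
  moreover have "AE x in M. real_cond_exp M G (indicator D) x \<le> 1"
    by (rule real_cond_exp_le_c) (auto simp: D)
  ultimately show ?thesis unfolding cprob_def by auto
qed

lemma cprob_swap:
  assumes G: "subalgebra M G" and D: "D \<in> sets M" and C: "C \<in> sets M"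
  shows "(LINT x:D|M. cprob M G C x) = (LINT x:C|M. cprob M G D x)"
proof -
  interpret sigma_finite_subalgebra M G by (rule sfs[OF G])
  have iC: "integrable M (cprob M G C)" and iD: "integrable M (cprob M G D)"
    using cprob_int[OF G] C D by auto
  have "(LINT x:D|M. cprob M G C x) = (\<integral>x. cprob M G C x * indicator D x \<partial>M)"
    unfolding set_lebesgue_integral_def by (simp add: mult.commute)
  also have "\<dots> = (\<integral>x. cprob M G C x * cprob M G D x \<partial>M)"
    unfolding cprob_def[of M G D]
    by (rule real_cond_exp_intg(2)[symmetric]) (use integrable_mult_ind[OF iC D] D in auto)
  also have "\<dots> = (\<integral>x. cprob M G D x * cprob M G C x \<partial>M)"
    by (simp add: mult.commute)
  also have "\<dots> = (\<integral>x. cprob M G D x * indicator C x \<partial>M)"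
    unfolding cprob_def[of M G C]
    by (rule real_cond_exp_intg(2)) (use integrable_mult_ind[OF iD C] C in auto)
  also have "\<dots> = (LINT x:C|M. cprob M G D x)"
    unfolding set_lebesgue_integral_def by (simp add: mult.commute)
  finally show ?thesis .
qed

lemma sub_sets: "subalgebra M G \<Longrightarrow> B \<in> sets G \<Longrightarrow> B \<in> sets M"
  unfolding subalgebra_def by blast

lemma cond_indep_sym: 
  assumes H: "cond_indep M G S1 S2" shows "cond_indep M G S2 S1"
  unfolding cond_indep_def
proof (intro ballI)
  fix a b assume a: "a \<in> sigma_sets (space M) S2" and b: "b \<in> sigma_sets (space M) S1"
  have "AE \<omega> in M. cprob M G (b \<inter> a) \<omega> = cprob M G b \<omega> * cprob M G a \<omega>"
    using H a b unfolding cond_indep_def by blast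
  then show "AE \<omega> in M. cprob M G (a \<inter> b) \<omega> = cprob M G a \<omega> * cprob M G b \<omega>"
    by (simp add: Int_commute mult.commute)
qed

lemma ci_basic:
  assumes G: "subalgebra M G" and CI: "cond_indep M G S1 S2"
    and S1: "S1 \<subseteq> sets M" and S2: "S2 \<subseteq> sets M"
    and E1: "E1 \<in> sigma_sets (space M) S1" and E2: "E2 \<in> sigma_sets (space M) S2"
    and B: "B \<in> sets G" and B': "B' \<in> sets G"
  shows "measure M (E1 \<inter> B \<inter> (E2 \<inter> B')) = (LINT x:(E1 \<inter> B)|M. cprob M G (E2 \<inter> B') x)"
proof -
  interpret sigma_finite_subalgebra M G by (rule sfs[OF G])
  have E1M: "E1 \<in> sets M" using E1 S1 sets.sigma_sets_subset by blast
  have E2M: "E2 \<in> sets M" using E2 S2 sets.sigma_sets_subset by blast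
  have BM: "B \<in> sets M" "B' \<in> sets M" using B B' G by (auto intro: sub_sets)
  have [measurable]: "B \<in> sets G" "B' \<in> sets G" "E1 \<in> sets M" "E2 \<in> sets M" "B \<in> sets M" "B' \<in> sets M"
    using B B' E1M E2M BM by auto
  let ?c1 = "cprob M G E1" and ?c2 = "cprob M G E2"
  have ic2: "integrable M ?c2" using cprob_int[OF G E2M] .
  have m1: "AE x in M. cprob M G (E2 \<inter> B') x = indicator B' x * ?c2 x"
  proof -
    have "cprob M G (E2 \<inter> B') = real_cond_exp M G (\<lambda>x. indicator B' x * indicator E2 x)"
      unfolding cprob_def by (rule arg_cong[where f="real_cond_exp M G"]) (simp add: fun_eq_iff indicator_inter_arith mult.commute)
    moreover have "AE x in M. real_cond_exp M G (\<lambda>x. indicator B' x * indicator E2 x) x = indicator B' x * real_cond_exp M G (indicator E2) x"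
      by (rule real_cond_exp_mult) (auto simp: indicator_inter_arith[symmetric])
    ultimately show ?thesis unfolding cprob_def by simp
  qed
  have "(LINT x:(E1 \<inter> B)|M. cprob M G (E2 \<inter> B') x) = (\<integral>x. indicator (E1 \<inter> B) x * (indicator B' x * ?c2 x) \<partial>M)"
    unfolding set_lebesgue_integral_def using m1 by (intro integral_cong_AE) auto
  also have "\<dots> = (\<integral>x. (indicator (B \<inter> B') x * ?c2 x) * indicator E1 x \<partial>M)"
    by (intro Bochner_Integration.integral_cong) (auto simp: indicator_def)
  also have "\<dots> = (\<integral>x. (indicator (B \<inter> B') x * ?c2 x) * ?c1 x \<partial>M)"
    unfolding cprob_def[of M G E1]
  proof (rule real_cond_exp_intg(2)[symmetric])
    show "integrable M (\<lambda>x. indicator (B \<inter> B') x * ?c2 x * indicator E1 x)"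
      by (rule integrable_dom[OF ic2]) (auto simp: indicator_def)
  qed auto
  also have "\<dots> = (\<integral>x. indicator (B \<inter> B') x * cprob M G (E1 \<inter> E2) x \<partial>M)"
  proof (intro integral_cong_AE)
    have "AE x in M. cprob M G (E1 \<inter> E2) x = ?c1 x * ?c2 x"
      using CI E1 E2 unfolding cond_indep_def by auto
    then show "AE x in M. indicator (B \<inter> B') x * ?c2 x * ?c1 x = indicator (B \<inter> B') x * cprob M G (E1 \<inter> E2) x"
      by eventually_elim simp
  qed auto
  also have "\<dots> = (\<integral>x. indicator (B \<inter> B') x * indicator (E1 \<inter> E2) x \<partial>M)"
    unfolding cprob_def
    by (rule real_cond_exp_intg(2)) (auto simp: indicator_inter_arith[symmetric])
  also have "\<dots> = measure M (E1 \<inter> B \<inter> (E2 \<inter> B'))"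
  proof -
    have "(\<lambda>x. indicator (B \<inter> B') x * indicator (E1 \<inter> E2) x :: real) = indicator (E1 \<inter> B \<inter> (E2 \<inter> B'))"
      by (auto simp: indicator_def fun_eq_iff)
    moreover have "E1 \<inter> B \<inter> (E2 \<inter> B') \<inter> space M = E1 \<inter> B \<inter> (E2 \<inter> B')"
      using E1M sets.sets_into_space by blast
    ultimately show ?thesis by (simp add: Bochner_Integration.integral_indicator)
  qed
  finally show ?thesis ..
qed

lemma set_int_ind: "D \<in> sets M \<Longrightarrow> C \<in> sets M \<Longrightarrow> (LINT x:D|M. indicator C x) = measure M (D \<inter> C)"
proof -
  assume D: "D \<in> sets M" and C: "C \<in> sets M"
  have "(\<lambda>x. indicator D x *\<^sub>R indicator C x :: real) = indicator (D \<inter> C)"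
    by (auto simp: indicator_def fun_eq_iff)
  moreover have "D \<inter> C \<inter> space M = D \<inter> C" using D sets.sets_into_space by blast
  ultimately show ?thesis unfolding set_lebesgue_integral_def by (simp add: Bochner_Integration.integral_indicator)
qed

definition pis :: "'a set set \<Rightarrow> 'a measure \<Rightarrow> 'a set set" where
  "pis S G = {E \<inter> B | E B. E \<in> sigma_sets (space M) S \<and> B \<in> sets G}"

lemma pis_props:
  assumes G: "subalgebra M G" and S: "S \<subseteq> sets M"
  shows "Int_stable (pis S G)" "pis S G \<subseteq> sets M"
    "sigma_sets (space M) (S \<union> sets G) = sigma_sets (space M) (pis S G)"
proof -
  have SP: "S \<subseteq> Pow (space M)" using S sets.sets_into_space by blast
  interpret SA: sigma_algebra "space M" "sigma_sets (space M) S" using SP by (rule sigma_algebra_sigma_sets)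
  have GM: "sets G \<subseteq> sets M" using G unfolding subalgebra_def by blast
  have SUP: "S \<union> sets G \<subseteq> Pow (space M)" using SP GM sets.sets_into_space by blast
  interpret SB: sigma_algebra "space M" "sigma_sets (space M) (S \<union> sets G)" using SUP by (rule sigma_algebra_sigma_sets)
  interpret GG: sigma_algebra "space M" "sets G" using G unfolding subalgebra_def
    by (metis sets.sigma_algebra_axioms)
  show "Int_stable (pis S G)" unfolding Int_stable_def pis_def
  proof (intro ballI)
    fix a b assume "a \<in> {E \<inter> B |E B. E \<in> sigma_sets (space M) S \<and> B \<in> sets G}"
      "b \<in> {E \<inter> B |E B. E \<in> sigma_sets (space M) S \<and> B \<in> sets G}"
    then obtain E1 B1 E2 B2 where "a = E1 \<inter> B1" "b = E2 \<inter> B2" "E1 \<in> sigma_sets (space M) S"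
      "E2 \<in> sigma_sets (space M) S" "B1 \<in> sets G" "B2 \<in> sets G" by blast
    then show "a \<inter> b \<in> {E \<inter> B |E B. E \<in> sigma_sets (space M) S \<and> B \<in> sets G}"
      by (intro CollectI exI[of _ "E1 \<inter> E2"] exI[of _ "B1 \<inter> B2"]) (auto intro: SA.Int GG.Int)
  qed
  have pisub: "pis S G \<subseteq> sigma_sets (space M) (S \<union> sets G)"
  proof
    fix x assume "x \<in> pis S G"
    then obtain E B where x: "x = E \<inter> B" "E \<in> sigma_sets (space M) S" "B \<in> sets G" unfolding pis_def by blast
    have "E \<in> sigma_sets (space M) (S \<union> sets G)" using x(2) sigma_sets_mono'[of S "S \<union> sets G"] by blast
    moreover have "B \<in> sigma_sets (space M) (S \<union> sets G)" using x(3) by blast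
    ultimately show "x \<in> sigma_sets (space M) (S \<union> sets G)" using x(1) SB.Int by blast
  qed
  show "pis S G \<subseteq> sets M" using pisub sets.sigma_sets_subset[of "S \<union> sets G"] S GM by blast
  show "sigma_sets (space M) (S \<union> sets G) = sigma_sets (space M) (pis S G)"
  proof (rule sigma_sets_eqI)
    fix a assume a: "a \<in> S \<union> sets G"
    show "a \<in> sigma_sets (space M) (pis S G)"
    proof (cases "a \<in> S")
      case True
      then have "a = a \<inter> space M" using SP by blast
      moreover have "space M \<in> sets G" using G unfolding subalgebra_def by (metis sets.top)
      ultimately have "a \<in> pis S G" unfolding pis_def using True by blast
      then show ?thesis by blast
    next
      case False
      then have aG: "a \<in> sets G" using a by blast
      have "a = space M \<inter> a" using aG GM sets.sets_into_space by blast
      then have "a \<in> pis S G" unfolding pis_def using aG sigma_sets_top by blast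
      then show ?thesis by blast
    qed
  next
    fix b assume "b \<in> pis S G"
    then show "b \<in> sigma_sets (space M) (S \<union> sets G)" using pisub by blast
  qed
qed

lemma ci_sets:
  assumes G: "subalgebra M G" and CI: "cond_indep M G S1 S2"
    and S1: "S1 \<subseteq> sets M" and S2: "S2 \<subseteq> sets M"
    and D: "D \<in> sigma_sets (space M) (S1 \<union> sets G)" and C: "C \<in> sigma_sets (space M) (S2 \<union> sets G)"
  shows "(LINT x:C|M. indicator D x) = (LINT x:C|M. cprob M G D x)"
proof -
  interpret sigma_finite_subalgebra M G by (rule sfs[OF G])
  note P1 = pis_props[OF G S1] and P2 = pis_props[OF G S2]
  have T1M: "sigma_sets (space M) (S1 \<union> sets G) \<subseteq> sets M" using P1 sets.sigma_sets_subset by metis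
  have T2M: "sigma_sets (space M) (S2 \<union> sets G) \<subseteq> sets M" using P2 sets.sigma_sets_subset by metis
  have stepb: "(LINT x:D'|M. indicator C' x) = (LINT x:D'|M. cprob M G C' x)"
    if C': "C' \<in> pis S2 G" and D': "D' \<in> sigma_sets (space M) (S1 \<union> sets G)" for C' D'
  proof -
    have C'M: "C' \<in> sets M" using C' P2 by blast
    show ?thesis
    proof (rule set_int_eq_sigma[OF P1(1) P1(2)])
      show "integrable M (indicator C' :: 'a \<Rightarrow> real)" by (rule ind_int[OF C'M])
      show "integrable M (cprob M G C')" using cprob_int[OF G C'M] .
      show "(\<integral>x. indicator C' x \<partial>M) = (\<integral>x. cprob M G C' x \<partial>M)"
        unfolding cprob_def using C'M by (simp add: real_cond_exp_int(2))
      show "D' \<in> sigma_sets (space M) (pis S1 G)" using D' P1(3) by simp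
      fix D'' assume "D'' \<in> pis S1 G"
      then obtain E1 B where d: "D'' = E1 \<inter> B" "E1 \<in> sigma_sets (space M) S1" "B \<in> sets G" unfolding pis_def by blast
      obtain E2 B' where c: "C' = E2 \<inter> B'" "E2 \<in> sigma_sets (space M) S2" "B' \<in> sets G" using C' unfolding pis_def by blast
      have "D'' \<in> sets M" using \<open>D'' \<in> pis S1 G\<close> P1 by blast
      then have "(LINT x:D''|M. indicator C' x) = measure M (D'' \<inter> C')" using C'M by (rule set_int_ind)
      also have "\<dots> = (LINT x:D''|M. cprob M G C' x)"
        unfolding d c by (rule ci_basic[OF G CI S1 S2 d(2) c(2) d(3) c(3)])
      finally show "(LINT x:D''|M. indicator C' x) = (LINT x:D''|M. cprob M G C' x)" .
    qed
  qed
  have DM: "D \<in> sets M" using D T1M by blast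
  show ?thesis
  proof (rule set_int_eq_sigma[OF P2(1) P2(2)])
    show "integrable M (indicator D :: 'a \<Rightarrow> real)" by (rule ind_int[OF DM])
    show "integrable M (cprob M G D)" using cprob_int[OF G DM] .
    show "(\<integral>x. indicator D x \<partial>M) = (\<integral>x. cprob M G D x \<partial>M)"
      unfolding cprob_def using DM by (simp add: real_cond_exp_int(2))
    show "C \<in> sigma_sets (space M) (pis S2 G)" using C P2(3) by simp
    fix C' assume C': "C' \<in> pis S2 G"
    have C'M: "C' \<in> sets M" using C' P2 by blast
    have "(LINT x:C'|M. indicator D x) = measure M (C' \<inter> D)" using C'M DM by (rule set_int_ind)
    also have "\<dots> = (LINT x:D|M. indicator C' x)" using C'M DM by (simp add: set_int_ind Int_commute)
    also have "\<dots> = (LINT x:D|M. cprob M G C' x)" by (rule stepb[OF C' D])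
    also have "\<dots> = (LINT x:C'|M. cprob M G D x)" by (rule cprob_swap[OF G DM C'M])
    finally show "(LINT x:C'|M. indicator D x) = (LINT x:C'|M. cprob M G D x)" .
  qed
qed

lemma sub_gen2: "subalgebra M G \<Longrightarrow> S \<subseteq> sets M \<Longrightarrow> subalgebra (gen M (S \<union> sets G)) G"
proof -
  assume G: "subalgebra M G" and S: "S \<subseteq> sets M"
  have GM: "sets G \<subseteq> sets M" using G unfolding subalgebra_def by blast
  have "S \<union> sets G \<subseteq> Pow (space M)" using S GM sets.sets_into_space by blast
  then show ?thesis using G unfolding subalgebra_def by (auto simp: sets_gen)
qed

lemma sub_gen3: "subalgebra M G \<Longrightarrow> S \<subseteq> sets M \<Longrightarrow> subalgebra M (gen M (S \<union> sets G))"
  by (rule sub_gen) (auto simp: subalgebra_def)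

lemma T_sub: "subalgebra M G \<Longrightarrow> S \<subseteq> sets M \<Longrightarrow> sigma_sets (space M) (S \<union> sets G) \<subseteq> sets M"
  by (rule sets.sigma_sets_subset) (auto simp: subalgebra_def)

lemma ci_cexp:
  assumes G: "subalgebra M G" and CI: "cond_indep M G S1 S2"
    and S1: "S1 \<subseteq> sets M" and S2: "S2 \<subseteq> sets M"
    and D: "D \<in> sigma_sets (space M) (S1 \<union> sets G)"
  shows "AE x in M. real_cond_exp M (gen M (S2 \<union> sets G)) (indicator D) x = cprob M G D x"
proof -
  have G2: "subalgebra M (gen M (S2 \<union> sets G))" by (rule sub_gen3[OF G S2])
  interpret G2: sigma_finite_subalgebra M "gen M (S2 \<union> sets G)" by (rule sfs[OF G2])
  have GM: "sets G \<subseteq> sets M" using G unfolding subalgebra_def by blast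
  have SP: "S2 \<union> sets G \<subseteq> Pow (space M)" using S2 GM sets.sets_into_space by blast
  have DM: "D \<in> sets M" using D T_sub[OF G S1] by blast
  show ?thesis
  proof (rule G2.real_cond_exp_charact)
    fix C assume "C \<in> sets (gen M (S2 \<union> sets G))"
    then have C: "C \<in> sigma_sets (space M) (S2 \<union> sets G)" using sets_gen[OF SP] by simp
    show "(LINT x:C|M. indicator D x) = (LINT x:C|M. cprob M G D x)"
      by (rule ci_sets[OF G CI S1 S2 D C])
  next
    show "integrable M (indicator D :: 'a \<Rightarrow> real)" by (rule ind_int[OF DM])
    show "integrable M (cprob M G D)" by (rule cprob_int[OF G DM])
    show "cprob M G D \<in> borel_measurable (gen M (S2 \<union> sets G))"
      by (rule measurable_from_subalg[OF sub_gen2[OF G S2]]) simp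
  qed
qed

lemma ci_fun:
  assumes G: "subalgebra M G" and CI: "cond_indep M G S1 S2"
    and S1: "S1 \<subseteq> sets M" and S2: "S2 \<subseteq> sets M"
    and f: "integrable M f" and fm: "f \<in> borel_measurable (gen M (S1 \<union> sets G))"
  shows "AE x in M. real_cond_exp M (gen M (S2 \<union> sets G)) f x = real_cond_exp M G f x"
proof -
  interpret sigma_finite_subalgebra M G by (rule sfs[OF G])
  have G2: "subalgebra M (gen M (S2 \<union> sets G))" by (rule sub_gen3[OF G S2])
  interpret G2: sigma_finite_subalgebra M "gen M (S2 \<union> sets G)" by (rule sfs[OF G2])
  have G1: "subalgebra M (gen M (S1 \<union> sets G))" by (rule sub_gen3[OF G S1])
  interpret G1: sigma_finite_subalgebra M "gen M (S1 \<union> sets G)" by (rule sfs[OF G1])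
  have GM: "sets G \<subseteq> sets M" using G unfolding subalgebra_def by blast
  have SP: "S2 \<union> sets G \<subseteq> Pow (space M)" using S2 GM sets.sets_into_space by blast
  have [measurable]: "f \<in> borel_measurable M" using f by auto
  show ?thesis
  proof (rule G2.real_cond_exp_charact)
    show "integrable M f" by fact
    show "integrable M (real_cond_exp M G f)" using f by (rule real_cond_exp_int(1))
    show "real_cond_exp M G f \<in> borel_measurable (gen M (S2 \<union> sets G))"
      by (rule measurable_from_subalg[OF sub_gen2[OF G S2]]) simp
    fix C assume "C \<in> sets (gen M (S2 \<union> sets G))"
    then have C: "C \<in> sigma_sets (space M) (S2 \<union> sets G)" using sets_gen[OF SP] by simp
    then have CM: "C \<in> sets M" using T_sub[OF G S2] by blast
    have ae1: "AE x in M. real_cond_exp M (gen M (S1 \<union> sets G)) (indicator C) x = cprob M G C x"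
      by (rule ci_cexp[OF G cond_indep_sym[OF CI] S2 S1 C])
    have bnd: "AE x in M. 0 \<le> cprob M G C x \<and> cprob M G C x \<le> 1" by (rule cprob_bounds[OF G CM])
    have "(LINT x:C|M. f x) = (\<integral>x. f x * indicator C x \<partial>M)"
      unfolding set_lebesgue_integral_def by (simp add: mult.commute)
    also have "\<dots> = (\<integral>x. f x * real_cond_exp M (gen M (S1 \<union> sets G)) (indicator C) x \<partial>M)"
      by (rule G1.real_cond_exp_intg(2)[symmetric]) (use integrable_mult_ind[OF f CM] fm CM in auto)
    also have "\<dots> = (\<integral>x. cprob M G C x * f x \<partial>M)"
      using ae1 by (intro integral_cong_AE) (auto simp: mult.commute)
    also have "\<dots> = (\<integral>x. cprob M G C x * real_cond_exp M G f x \<partial>M)"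
    proof (rule real_cond_exp_intg(2)[symmetric])
      show "integrable M (\<lambda>x. cprob M G C x * f x)"
        by (rule integrable_dom_AE[OF f]) (use bnd in \<open>auto simp: abs_mult intro!: mult_left_le_one_le\<close>)
    qed auto
    also have "\<dots> = (\<integral>x. real_cond_exp M G f x * cprob M G C x \<partial>M)" by (simp add: mult.commute)
    also have "\<dots> = (\<integral>x. real_cond_exp M G f x * indicator C x \<partial>M)"
      unfolding cprob_def
      by (rule real_cond_exp_intg(2)) (use integrable_mult_ind[OF real_cond_exp_int(1)[OF f] CM] CM in auto)
    also have "\<dots> = (LINT x:C|M. real_cond_exp M G f x)"
      unfolding set_lebesgue_integral_def by (simp add: mult.commute)
    finally show "(LINT x:C|M. f x) = (LINT x:C|M. real_cond_exp M G f x)" .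
  qed
qed

lemma ci_prod:
  assumes G: "subalgebra M G" and CI: "cond_indep M G S1 S2"
    and S1: "S1 \<subseteq> sets M" and S2: "S2 \<subseteq> sets M"
    and f: "integrable M f" and fm: "f \<in> borel_measurable (gen M (S1 \<union> sets G))"
    and hm: "h \<in> borel_measurable (gen M (S2 \<union> sets G))" and hf: "integrable M (\<lambda>x. h x * f x)"
  shows "(\<integral>x. h x * f x \<partial>M) = (\<integral>x. h x * real_cond_exp M G f x \<partial>M)"
proof -
  have G2: "subalgebra M (gen M (S2 \<union> sets G))" by (rule sub_gen3[OF G S2])
  interpret G2: sigma_finite_subalgebra M "gen M (S2 \<union> sets G)" by (rule sfs[OF G2])
  have [measurable]: "f \<in> borel_measurable M" using f by auto
  have "(\<integral>x. h x * f x \<partial>M) = (\<integral>x. h x * real_cond_exp M (gen M (S2 \<union> sets G)) f x \<partial>M)"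
    by (rule G2.real_cond_exp_intg(2)[symmetric]) (use hf hm in auto)
  also have "\<dots> = (\<integral>x. h x * real_cond_exp M G f x \<partial>M)"
    using ci_fun[OF G CI S1 S2 f fm] hm measurable_from_subalg[OF G2 hm]
    by (intro integral_cong_AE) (auto intro: borel_measurable_cond_exp2)
  finally show ?thesis .
qed

lemma ev_sub: "V \<in> measurable M N \<Longrightarrow> ev M V N \<subseteq> sets M"
  unfolding ev_def by (auto intro: measurable_sets)

lemma Zev_sub: "Z \<in> measurable M (MZK MZ K) \<Longrightarrow> J \<subseteq> {1..K} \<Longrightarrow> Zev M Z MZ J \<subseteq> sets M"
  unfolding Zev_def
proof (intro UN_least)
  fix j assume Z: "Z \<in> measurable M (MZK MZ K)" and J: "J \<subseteq> {1..K}" and j: "j \<in> J"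
  have "(\<lambda>\<omega>. Z \<omega> j) \<in> measurable M MZ"
    using measurable_compose[OF Z measurable_component_singleton[of j "{1..K}" "\<lambda>_. MZ"]] j J by auto
  then show "ev M (\<lambda>\<omega>. Z \<omega> j) MZ \<subseteq> sets M" by (rule ev_sub)
qed

lemma Zev_in: "j \<in> J \<Longrightarrow> ev M (\<lambda>\<omega>. Z \<omega> j) MZ \<subseteq> Zev M Z MZ J"
  unfolding Zev_def by blast

lemma meas_gen: "T \<subseteq> S \<Longrightarrow> S \<subseteq> sets M \<Longrightarrow> V \<in> measurable M N \<Longrightarrow> ev M V N \<subseteq> T \<Longrightarrow> V \<in> measurable (gen M S) N"
proof -
  assume TS: "T \<subseteq> S" and S: "S \<subseteq> sets M" and V: "V \<in> measurable M N" and E: "ev M V N \<subseteq> T"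
  have SP: "S \<subseteq> Pow (space M)" using S sets.sets_into_space by blast
  show ?thesis
  proof (rule measurableI)
    fix x assume "x \<in> space (gen M S)"
    then show "V x \<in> space N" using V by (auto simp: measurable_space)
  next
    fix B assume "B \<in> sets N"
    then have "V -` B \<inter> space M \<in> ev M V N" unfolding ev_def by blast
    then have "V -` B \<inter> space M \<in> S" using E TS by blast
    then show "V -` B \<inter> space (gen M S) \<in> sets (gen M S)" using sets_gen[OF SP] by auto
  qed
qed

lemma Zmeas_gen: "S \<subseteq> sets M \<Longrightarrow> Z \<in> measurable M (MZK MZ K) \<Longrightarrow>
   (\<And>j. j \<in> {1..K} \<Longrightarrow> ev M (\<lambda>\<omega>. Z \<omega> j) MZ \<subseteq> S) \<Longrightarrow> Z \<in> measurable (gen M S) (MZK MZ K)"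
proof -
  assume S: "S \<subseteq> sets M" and Z: "Z \<in> measurable M (MZK MZ K)" and E: "\<And>j. j \<in> {1..K} \<Longrightarrow> ev M (\<lambda>\<omega>. Z \<omega> j) MZ \<subseteq> S"
  have "(\<lambda>\<omega> j. Z \<omega> j) \<in> measurable (gen M S) (MZK MZ K)"
  proof (rule measurable_PiM_single')
    fix j assume j: "j \<in> {1..K}"
    have "(\<lambda>\<omega>. Z \<omega> j) \<in> measurable M MZ"
      using measurable_compose[OF Z measurable_component_singleton[of j "{1..K}" "\<lambda>_. MZ"]] j by auto
    then show "(\<lambda>\<omega>. Z \<omega> j) \<in> measurable (gen M S) MZ"
      by (rule meas_gen[OF order_refl S _ E[OF j]])
  next
    show "(\<lambda>\<omega>. Z \<omega>) \<in> space (gen M S) \<rightarrow> (\<Pi>\<^sub>E i\<in>{1..K}. space MZ)"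
      using measurable_space[OF Z] by (auto simp: space_PiM)
  qed
  then show ?thesis by simp
qed

lemma L2_L1: "(f :: 'a \<Rightarrow> real) \<in> borel_measurable M \<Longrightarrow> integrable M (\<lambda>x. (f x)\<^sup>2) \<Longrightarrow> integrable M f"
proof -
  assume m: "f \<in> borel_measurable M" and i: "integrable M (\<lambda>x. (f x)\<^sup>2)"
  have "integrable M (\<lambda>x. 1 + (f x)\<^sup>2)" using i by auto
  then show ?thesis
  proof (rule integrable_dom[OF _ m])
    fix x
    have "0 \<le> (\<bar>f x\<bar> - 1)\<^sup>2" by simp
    then have "2 * \<bar>f x\<bar> \<le> 1 + (f x)\<^sup>2" by (simp add: power2_diff power2_abs)
    then show "\<bar>f x\<bar> \<le> \<bar>1 + (f x)\<^sup>2\<bar>" by simp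
  qed
qed

lemma L2_prod: "(f :: 'a \<Rightarrow> real) \<in> borel_measurable M \<Longrightarrow> (g :: 'a \<Rightarrow> real) \<in> borel_measurable M \<Longrightarrow> integrable M (\<lambda>x. (f x)\<^sup>2) \<Longrightarrow> integrable M (\<lambda>x. (g x)\<^sup>2) \<Longrightarrow> integrable M (\<lambda>x. f x * g x)"
proof -
  assume m: "f \<in> borel_measurable M" "g \<in> borel_measurable M" and i: "integrable M (\<lambda>x. (f x)\<^sup>2)" "integrable M (\<lambda>x. (g x)\<^sup>2)"
  have "integrable M (\<lambda>x. (f x)\<^sup>2 + (g x)\<^sup>2)" using i by auto
  then show ?thesis
  proof (rule integrable_dom)
    show "(\<lambda>x. f x * g x) \<in> borel_measurable M" using m by auto
    fix x show "\<bar>f x * g x\<bar> \<le> \<bar>(f x)\<^sup>2 + (g x)\<^sup>2\<bar>"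
    proof -
      have a: "2 * \<bar>f x\<bar> * \<bar>g x\<bar> \<le> (f x)\<^sup>2 + (g x)\<^sup>2"
        using sum_squares_bound[of "\<bar>f x\<bar>" "\<bar>g x\<bar>"] by (simp add: power2_abs)
      have b: "0 \<le> \<bar>f x\<bar> * \<bar>g x\<bar>" by simp
      have c: "\<bar>f x * g x\<bar> = \<bar>f x\<bar> * \<bar>g x\<bar>" by (simp add: abs_mult)
      have d: "\<bar>(f x)\<^sup>2 + (g x)\<^sup>2\<bar> = (f x)\<^sup>2 + (g x)\<^sup>2" by simp
      show ?thesis unfolding c d using a b by linarith
    qed
  qed
qed

end

lemma signA_sq: "signA a * signA a = 1"
  unfolding signA_def by auto

lemma signA_meas[measurable]: "signA \<in> borel_measurable borel"
proof -
  have "signA = (\<lambda>a. 2 * indicator {1::real} a - 1)" unfolding signA_def by (rule ext) (simp add: indicator_def)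
  moreover have "(\<lambda>a. 2 * indicator {1::real} a - 1 :: real) \<in> borel_measurable borel" by measurable
  ultimately show ?thesis by simp
qed

lemma signA_nz: "signA a \<noteq> 0"
  unfolding signA_def by auto

lemma meas_q:
  fixes q :: "'z \<times> real \<times> 'x \<Rightarrow> real"
  assumes "(\<lambda>(z, a, x). signA a * q (z, a, x)) \<in> borel_measurable (N1 \<Otimes>\<^sub>M (borel \<Otimes>\<^sub>M N2))"
  shows "q \<in> borel_measurable (N1 \<Otimes>\<^sub>M (borel \<Otimes>\<^sub>M N2))"
proof -
  let ?d = "(\<lambda>(z, a, x). signA a * q (z, a, x))"
  have "q = (\<lambda>p. signA (fst (snd p)) * ?d p)"
    by (rule ext) (auto simp: signA_sq mult.assoc[symmetric])
  moreover have "(\<lambda>p. signA (fst (snd p)) * ?d p) \<in> borel_measurable (N1 \<Otimes>\<^sub>M (borel \<Otimes>\<^sub>M N2))"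
    using assms by measurable
  ultimately show ?thesis by simp
qed

lemma meas_comp3:
  fixes q :: "'z \<times> real \<times> 'x \<Rightarrow> real"
  assumes "Z \<in> measurable F N1" "A \<in> borel_measurable F" "X \<in> measurable F N2"
    "q \<in> borel_measurable (N1 \<Otimes>\<^sub>M (borel \<Otimes>\<^sub>M N2))"
  shows "(\<lambda>\<omega>. q (Z \<omega>, A \<omega>, X \<omega>)) \<in> borel_measurable F"
  using assms by measurable

lemma (in prob_space) gen_basic: "S \<subseteq> sets M \<Longrightarrow> T \<subseteq> S \<Longrightarrow> T \<subseteq> sets (gen M S)"
proof -
  assume S: "S \<subseteq> sets M" and T: "T \<subseteq> S"
  have SP: "S \<subseteq> Pow (space M)" using S sets.sets_into_space by blast
  show ?thesis unfolding sets_gen[OF SP] using T by auto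
qed

lemma (in prob_space) ind_meas:
  assumes "A \<in> borel_measurable F" "space F = space M"
  shows "indicator {x \<in> space M. A x = (a::real)} \<in> borel_measurable F"
proof -
  have "{x \<in> space M. A x = a} = A -` {a} \<inter> space F" using assms(2) by auto
  moreover have "A -` {a} \<inter> space F \<in> sets F" using assms(1) by (rule measurable_sets) simp
  ultimately show ?thesis by simp
qed

lemma (in prob_space) dich:
  assumes "E \<in> sigma_sets (space M) (ev M A borel)"
  shows "(\<forall>\<omega>\<in>space M. A \<omega> = a \<longrightarrow> \<omega> \<in> E) \<or> (\<forall>\<omega>\<in>space M. A \<omega> = a \<longrightarrow> \<omega> \<notin> E)"
  using assms
proof (induction rule: sigma_sets.induct)
  case (Basic a')
  then obtain B where "a' = A -` B \<inter> space M" unfolding ev_def by blast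
  then show ?case by (cases "a \<in> B") auto
next
  case Empty then show ?case by auto
next
  case (Compl a') then show ?case by auto
next
  case (Union f) then show ?case by blast
qed

theorem theoremA2:
  fixes M :: "'w measure"
    and Y Y0 Y1 A :: "'w \<Rightarrow> real"
    and Z :: "'w \<Rightarrow> nat \<Rightarrow> 'z" and MZ :: "'z measure"
    and W :: "'w \<Rightarrow> 'c" and MW :: "'c measure"
    and X :: "'w \<Rightarrow> 'x" and MX :: "'x measure"
    and U :: "'w \<Rightarrow> 'u" and MU :: "'u measure"
    and K \<gamma> :: nat and \<nu>s :: "nat set"
    and q' :: "(nat \<Rightarrow> 'z) \<times> real \<times> 'x \<Rightarrow> real"
  assumes P: "prob_space M"
    and Ym: "Y \<in> borel_measurable M" and Y0m: "Y0 \<in> borel_measurable M" and Y1m: "Y1 \<in> borel_measurable M"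
    and Y0sq: "integrable M (\<lambda>\<omega>. (Y0 \<omega>)\<^sup>2)" and Y1sq: "integrable M (\<lambda>\<omega>. (Y1 \<omega>)\<^sup>2)"
    and Am: "A \<in> borel_measurable M" and A01: "\<forall>\<omega>\<in>space M. A \<omega> \<in> {0, 1}"
    and Zm: "Z \<in> measurable M (MZK MZ K)"
    and Wm: "W \<in> measurable M MW" and Xm: "X \<in> measurable M MX" and Um: "U \<in> measurable M MU"
    and consistency: "AE \<omega> in M. (A \<omega> = 1 \<longrightarrow> Y \<omega> = Y1 \<omega>) \<and> (A \<omega> = 0 \<longrightarrow> Y \<omega> = Y0 \<omega>)"
    and gam: "\<gamma> \<in> {1..K}"
    and valid: "valid_proxies M Y0 Y1 Y A Z MZ K W MW X MX U MU \<nu>s"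
    and card: "card \<nu>s \<ge> \<gamma>"
    and q'H: "(\<lambda>(z, a, x). signA a * q' (z, a, x)) \<in> Hgam M Z MZ K A X MX \<gamma>"
    and q'bridge: "AE \<omega> in M.
        real_cond_exp M (F_UAZX M U MU A Z MZ K \<nu>s X MX) (\<lambda>\<omega>. q' (Z \<omega>, A \<omega>, X \<omega>)) \<omega>
          = 1 / propA M (F_UZX M U MU Z MZ K \<nu>s X MX) A \<omega>"
  shows "(integral\<^sup>L M (\<lambda>\<omega>. Y1 \<omega> - Y0 \<omega>)
            = integral\<^sup>L M (\<lambda>\<omega>. q' (Z \<omega>, 1, X \<omega>) * A \<omega> * Y \<omega> - q' (Z \<omega>, 0, X \<omega>) * (1 - A \<omega>) * Y \<omega>)
          \<and> (AE \<omega> in M.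
               real_cond_exp M (gen M (ev M W MW \<union> ev M A borel \<union> ev M X MX)) (\<lambda>\<omega>. q' (Z \<omega>, A \<omega>, X \<omega>)) \<omega>
                 = 1 / propA M (gen M (ev M W MW \<union> ev M X MX)) A \<omega>))
       \<and> ((\<forall>g\<in>Hgam M Z MZ K A X MX \<gamma>.
              (\<forall>h\<in>L2fun M (\<lambda>\<omega>. (W \<omega>, A \<omega>, X \<omega>)) (MW \<Otimes>\<^sub>M (borel \<Otimes>\<^sub>M MX)).
                  integral\<^sup>L M (\<lambda>\<omega>. h (W \<omega>, A \<omega>, X \<omega>) * g (Z \<omega>, A \<omega>, X \<omega>)) = 0)
              \<longleftrightarrow> (AE \<omega> in M. g (Z \<omega>, A \<omega>, X \<omega>) = 0))
          \<longrightarrow> (\<forall>q :: (nat \<Rightarrow> 'z) \<times> real \<times> 'x \<Rightarrow> real.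
                 (\<lambda>(z, a, x). signA a * q (z, a, x)) \<in> Hgam M Z MZ K A X MX \<gamma>
                 \<and> (AE \<omega> in M.
                      real_cond_exp M (gen M (ev M W MW \<union> ev M A borel \<union> ev M X MX)) (\<lambda>\<omega>. q (Z \<omega>, A \<omega>, X \<omega>)) \<omega>
                        = 1 / propA M (gen M (ev M W MW \<union> ev M X MX)) A \<omega>)
                 \<longrightarrow> (AE \<omega> in M. q (Z \<omega>, A \<omega>, X \<omega>) = q' (Z \<omega>, A \<omega>, X \<omega>))
                   \<and> integral\<^sup>L M (\<lambda>\<omega>. Y1 \<omega> - Y0 \<omega>)
                       = integral\<^sup>L M (\<lambda>\<omega>. q (Z \<omega>, 1, X \<omega>) * A \<omega> * Y \<omega> - q (Z \<omega>, 0, X \<omega>) * (1 - A \<omega>) * Y \<omega>)))"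
proof -
  interpret prob_space M by (rule P)
  define G0 where "G0 = F_UZX M U MU Z MZ K \<nu>s X MX"
  define G1 where "G1 = F_UAZX M U MU A Z MZ K \<nu>s X MX"
  define H where "H = gen M (ev M W MW \<union> ev M X MX)"
  define HA where "HA = gen M (ev M W MW \<union> ev M A borel \<union> ev M X MX)"
  define Q' where "Q' = (\<lambda>\<omega>. q' (Z \<omega>, A \<omega>, X \<omega>))"
  define NN where "NN = MZK MZ K \<Otimes>\<^sub>M ((borel :: real measure) \<Otimes>\<^sub>M MX)"
  have nu: "\<nu>s \<subseteq> {1..K}"
    and ci0: "cond_indep M G0 (ev M A borel) (ev M Y0 borel)"
    and ci1: "cond_indep M G0 (ev M A borel) (ev M Y1 borel)"
    and pos: "\<forall>a\<in>{0::real,1}. AE \<omega> in M. 0 < cprob M G0 {x \<in> space M. A x = a} \<omega> \<and> cprob M G0 {x \<in> space M. A x = a} \<omega> < 1"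
    and ciY: "cond_indep M G1 (Zev M Z MZ \<nu>s) (ev M Y borel)"
    and ciW: "cond_indep M G0 (ev M W MW) (Zev M Z MZ \<nu>s \<union> ev M A borel)"
    using valid unfolding valid_proxies_def G0_def G1_def by auto
  have [measurable]: "Y \<in> borel_measurable M" "Y0 \<in> borel_measurable M" "Y1 \<in> borel_measurable M"
     "A \<in> borel_measurable M" "Z \<in> measurable M (MZK MZ K)" "W \<in> measurable M MW" "X \<in> measurable M MX"
     "U \<in> measurable M MU" using Ym Y0m Y1m Am Zm Wm Xm Um by auto
  have evU: "ev M U MU \<subseteq> sets M" by (rule ev_sub[OF Um])
  have evA: "ev M A borel \<subseteq> sets M" by (rule ev_sub[OF Am])
  have evX: "ev M X MX \<subseteq> sets M" by (rule ev_sub[OF Xm])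
  have evW: "ev M W MW \<subseteq> sets M" by (rule ev_sub[OF Wm])
  have evY: "ev M Y borel \<subseteq> sets M" by (rule ev_sub[OF Ym])
  have evY0: "ev M Y0 borel \<subseteq> sets M" by (rule ev_sub[OF Y0m])
  have evY1: "ev M Y1 borel \<subseteq> sets M" by (rule ev_sub[OF Y1m])
  have ZN: "Zev M Z MZ \<nu>s \<subseteq> sets M" by (rule Zev_sub[OF Zm nu])
  have ZC: "Zev M Z MZ ({1..K} - \<nu>s) \<subseteq> sets M" by (rule Zev_sub[OF Zm]) auto
  have G0S: "ev M U MU \<union> Zev M Z MZ ({1..K} - \<nu>s) \<union> ev M X MX \<subseteq> sets M" using evU ZC evX by blast
  have G1S: "ev M U MU \<union> ev M A borel \<union> Zev M Z MZ ({1..K} - \<nu>s) \<union> ev M X MX \<subseteq> sets M" using evU evA ZC evX by blast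
  have subG0: "subalgebra M G0" unfolding G0_def F_UZX_def by (rule sub_gen[OF G0S])
  have subG1: "subalgebra M G1" unfolding G1_def F_UAZX_def by (rule sub_gen[OF G1S])
  have subH: "subalgebra M H" unfolding H_def by (rule sub_gen) (use evW evX in blast)
  have subHA: "subalgebra M HA" unfolding HA_def by (rule sub_gen) (use evW evA evX in blast)
  have G0P: "ev M U MU \<union> Zev M Z MZ ({1..K} - \<nu>s) \<union> ev M X MX \<subseteq> Pow (space M)" using G0S sets.sets_into_space by blast
  have G1P: "ev M U MU \<union> ev M A borel \<union> Zev M Z MZ ({1..K} - \<nu>s) \<union> ev M X MX \<subseteq> Pow (space M)" using G1S sets.sets_into_space by blast
  have G0G1: "subalgebra G1 G0"
  proof -
    have "sets G0 \<subseteq> sets G1" unfolding G0_def G1_def F_UZX_def F_UAZX_def sets_gen[OF G0P] sets_gen[OF G1P]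
      by (rule sigma_sets_mono') blast
    then show ?thesis unfolding subalgebra_def G0_def G1_def F_UZX_def F_UAZX_def by simp
  qed
  have HHA: "subalgebra HA H"
  proof -
    have P1: "ev M W MW \<union> ev M X MX \<subseteq> Pow (space M)" using evW evX sets.sets_into_space by blast
    have P2: "ev M W MW \<union> ev M A borel \<union> ev M X MX \<subseteq> Pow (space M)" using evW evA evX sets.sets_into_space by blast
    have "sets H \<subseteq> sets HA" unfolding H_def HA_def sets_gen[OF P1] sets_gen[OF P2]
      by (rule sigma_sets_mono') blast
    then show ?thesis unfolding subalgebra_def H_def HA_def by simp
  qed
  interpret sG0: sigma_finite_subalgebra M G0 by (rule sfs[OF subG0])
  interpret sG1: sigma_finite_subalgebra M G1 by (rule sfs[OF subG1])
  interpret sH: sigma_finite_subalgebra M H by (rule sfs[OF subH])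
  interpret sHA: sigma_finite_subalgebra M HA by (rule sfs[OF subHA])
  have dq': "(\<lambda>(z, a, x). signA a * q' (z, a, x)) \<in> borel_measurable NN"
    and dq'2: "integrable M (\<lambda>\<omega>. ((\<lambda>(z, a, x). signA a * q' (z, a, x)) (Z \<omega>, A \<omega>, X \<omega>))\<^sup>2)"
    using q'H unfolding Hgam_def L2fun_def NN_def by auto
  have q'm[measurable]: "q' \<in> borel_measurable NN" using meas_q dq' unfolding NN_def by blast
  have Q'm[measurable]: "Q' \<in> borel_measurable M" unfolding Q'_def NN_def using q'm[unfolded NN_def] by measurable
  have Q'2: "integrable M (\<lambda>\<omega>. (Q' \<omega>)\<^sup>2)"
  proof -
    have "(\<lambda>\<omega>. ((\<lambda>(z, a, x). signA a * q' (z, a, x)) (Z \<omega>, A \<omega>, X \<omega>))\<^sup>2) = (\<lambda>\<omega>. (Q' \<omega>)\<^sup>2)"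
      unfolding Q'_def by (rule ext) (simp add: power_mult_distrib power2_eq_square[of "signA _"] signA_sq)
    then show ?thesis using dq'2 by simp
  qed
  have Q'i: "integrable M Q'" by (rule L2_L1[OF Q'm Q'2])
  define I where "I = (\<lambda>a::real. indicator {x \<in> space M. A x = a} :: 'w \<Rightarrow> real)"
  define p0 where "p0 = (\<lambda>a::real. cprob M G0 {x \<in> space M. A x = a})"
  define r1 where "r1 = real_cond_exp M G1 Q'"
  have Isets: "{x \<in> space M. A x = a} \<in> sets M" for a :: real by measurable
  have Im[measurable]: "I a \<in> borel_measurable M" for a unfolding I_def by (rule ind_meas) auto
  have I01: "I a \<omega> \<in> {0, 1}" for a \<omega> unfolding I_def by (auto simp: indicator_def)
  have Iabs: "\<bar>I a \<omega>\<bar> \<le> 1" for a \<omega> using I01[of a \<omega>] by auto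
  have p0m[measurable]: "p0 a \<in> borel_measurable G0" "p0 a \<in> borel_measurable M" for a
    unfolding p0_def by auto
  have p0I: "p0 a = real_cond_exp M G0 (I a)" for a unfolding p0_def I_def cprob_def ..
  have r1m[measurable]: "r1 \<in> borel_measurable M" "r1 \<in> borel_measurable G1" unfolding r1_def by auto
  have r1i: "integrable M r1" unfolding r1_def by (rule sG1.real_cond_exp_int(1)[OF Q'i])
  have r12: "integrable M (\<lambda>\<omega>. (r1 \<omega>)\<^sup>2)"
    unfolding r1_def
    by (rule sG1.integrable_convex_cond_exp[OF Q'i _ _ Q'2 convex_power2, where a=0 and b=0]) auto
  have A01': "AE \<omega> in M. A \<omega> \<in> {0, 1}" using A01 by auto
  have bridge: "AE \<omega> in M. r1 \<omega> = 1 / propA M G0 A \<omega>" using q'bridge unfolding r1_def Q'_def G1_def G0_def .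
  have fa: "(AE \<omega> in M. I a \<omega> * r1 \<omega> = I a \<omega> / p0 a \<omega>)
      \<and> (\<lambda>\<omega>. I a \<omega> / p0 a \<omega>) \<in> borel_measurable (gen M (ev M A borel \<union> sets G0))
      \<and> integrable M (\<lambda>\<omega>. (I a \<omega> / p0 a \<omega>)\<^sup>2)
      \<and> integrable M (\<lambda>\<omega>. I a \<omega> / p0 a \<omega>)
      \<and> (AE \<omega> in M. real_cond_exp M G0 (\<lambda>\<omega>. I a \<omega> / p0 a \<omega>) \<omega> = 1)" if a01: "a \<in> {0, 1}" for a
  proof -
    have F1: "AE \<omega> in M. I a \<omega> * r1 \<omega> = I a \<omega> / p0 a \<omega>"
      using bridge
    proof (eventually_elim)
      case (elim \<omega>)
      show ?case
      proof (cases "A \<omega> = a")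
        case True
        then have "propA M G0 A \<omega> = p0 a \<omega>" unfolding propA_def p0_def by simp
        then show ?thesis using elim True unfolding I_def by (auto simp: indicator_def)
      next
        case False then show ?thesis unfolding I_def by (auto simp: indicator_def)
      qed
    qed
    have fm: "(\<lambda>\<omega>. I a \<omega> / p0 a \<omega>) \<in> borel_measurable (gen M (ev M A borel \<union> sets G0))"
    proof -
      have S: "ev M A borel \<union> sets G0 \<subseteq> sets M" using evA subG0 unfolding subalgebra_def by blast
      have "A \<in> borel_measurable (gen M (ev M A borel \<union> sets G0))"
        by (rule meas_gen[OF _ S Am order_refl]) blast
      then have "I a \<in> borel_measurable (gen M (ev M A borel \<union> sets G0))"
        unfolding I_def by (rule ind_meas) simp
      moreover have "p0 a \<in> borel_measurable (gen M (ev M A borel \<union> sets G0))"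
        by (rule measurable_from_subalg[OF sub_gen2[OF subG0 evA]]) simp
      ultimately show ?thesis by measurable
    qed
    have f2: "integrable M (\<lambda>\<omega>. (I a \<omega> / p0 a \<omega>)\<^sup>2)"
    proof (rule integrable_dom_AE[OF r12])
      show "(\<lambda>\<omega>. (I a \<omega> / p0 a \<omega>)\<^sup>2) \<in> borel_measurable M" by measurable
      show "AE \<omega> in M. \<bar>(I a \<omega> / p0 a \<omega>)\<^sup>2\<bar> \<le> \<bar>(r1 \<omega>)\<^sup>2\<bar>"
        using F1
      proof eventually_elim
        case (elim \<omega>)
        then show ?case using I01[of a \<omega>] by (auto simp: power2_eq_square)
      qed
    qed
    have f1: "integrable M (\<lambda>\<omega>. I a \<omega> / p0 a \<omega>)" by (rule L2_L1[OF _ f2]) measurable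
    have F3: "AE \<omega> in M. real_cond_exp M G0 (\<lambda>\<omega>. I a \<omega> / p0 a \<omega>) \<omega> = 1"
    proof -
      have e: "(\<lambda>\<omega>. I a \<omega> / p0 a \<omega>) = (\<lambda>\<omega>. (1 / p0 a \<omega>) * I a \<omega>)" by (rule ext) simp
      have "AE \<omega> in M. real_cond_exp M G0 (\<lambda>\<omega>. (1 / p0 a \<omega>) * I a \<omega>) \<omega> = (1 / p0 a \<omega>) * real_cond_exp M G0 (I a) \<omega>"
      proof (rule sG0.real_cond_exp_mult)
        show "(\<lambda>\<omega>. 1 / p0 a \<omega>) \<in> borel_measurable G0" by measurable
        show "I a \<in> borel_measurable M" by measurable
        show "integrable M (\<lambda>\<omega>. 1 / p0 a \<omega> * I a \<omega>)" using f1 unfolding e .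
      qed
      moreover have "AE \<omega> in M. 0 < p0 a \<omega>" using pos a01 unfolding p0_def by auto
      ultimately show ?thesis unfolding e p0I[symmetric] by eventually_elim simp
    qed
    show ?thesis using F1 fm f2 f1 F3 by blast
  qed
  have Y2: "integrable M (\<lambda>\<omega>. (Y \<omega>)\<^sup>2)"
  proof (rule integrable_dom_AE)
    show "integrable M (\<lambda>\<omega>. (Y0 \<omega>)\<^sup>2 + (Y1 \<omega>)\<^sup>2)" using Y0sq Y1sq by auto
    show "(\<lambda>\<omega>. (Y \<omega>)\<^sup>2) \<in> borel_measurable M" by measurable
    show "AE \<omega> in M. \<bar>(Y \<omega>)\<^sup>2\<bar> \<le> \<bar>(Y0 \<omega>)\<^sup>2 + (Y1 \<omega>)\<^sup>2\<bar>"
      using consistency A01' by eventually_elim auto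
  qed
  have Gs1: "Zev M Z MZ \<nu>s \<union> sets G1 \<subseteq> sets M" using ZN subG1 unfolding subalgebra_def by blast
  have AG1: "ev M A borel \<subseteq> sets G1" unfolding G1_def F_UAZX_def by (rule gen_basic[OF G1S]) blast
  have XG1: "ev M X MX \<subseteq> sets G1" unfolding G1_def F_UAZX_def by (rule gen_basic[OF G1S]) blast
  have ZG1: "Zev M Z MZ ({1..K} - \<nu>s) \<subseteq> sets G1" unfolding G1_def F_UAZX_def by (rule gen_basic[OF G1S]) blast
  have AG0: "ev M X MX \<subseteq> sets G0" unfolding G0_def F_UZX_def by (rule gen_basic[OF G0S]) blast
  have ZG0: "Zev M Z MZ ({1..K} - \<nu>s) \<subseteq> sets G0" unfolding G0_def F_UZX_def by (rule gen_basic[OF G0S]) blast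
  have Zsplit: "ev M (\<lambda>\<omega>. Z \<omega> j) MZ \<subseteq> Zev M Z MZ \<nu>s \<union> Zev M Z MZ ({1..K} - \<nu>s)" if "j \<in> {1..K}" for j
    using that Zev_in[of j \<nu>s Z MZ] Zev_in[of j "{1..K} - \<nu>s" Z MZ] by (cases "j \<in> \<nu>s") auto
  have Q'G1: "Q' \<in> borel_measurable (gen M (Zev M Z MZ \<nu>s \<union> sets G1))"
  proof -
    have "Z \<in> measurable (gen M (Zev M Z MZ \<nu>s \<union> sets G1)) (MZK MZ K)"
      by (rule Zmeas_gen[OF Gs1 Zm]) (use Zsplit ZG1 in blast)
    moreover have "A \<in> borel_measurable (gen M (Zev M Z MZ \<nu>s \<union> sets G1))"
      by (rule meas_gen[OF _ Gs1 Am AG1]) blast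
    moreover have "X \<in> measurable (gen M (Zev M Z MZ \<nu>s \<union> sets G1)) MX"
      by (rule meas_gen[OF _ Gs1 Xm XG1]) blast
    ultimately show ?thesis unfolding Q'_def using q'm[unfolded NN_def] by (rule meas_comp3)
  qed
  have tau: "(\<integral>\<omega>. (I a \<omega> * Y \<omega>) * Q' \<omega> \<partial>M) = (\<integral>\<omega>. Ya \<omega> \<partial>M)"
    if a01: "a \<in> {0, 1}" and ciA: "cond_indep M G0 (ev M A borel) (ev M Ya borel)"
      and Yam[measurable]: "Ya \<in> borel_measurable M" and Ya2: "integrable M (\<lambda>\<omega>. (Ya \<omega>)\<^sup>2)"
      and cons: "AE \<omega> in M. A \<omega> = a \<longrightarrow> Y \<omega> = Ya \<omega>" for a Ya
  proof -
    note F = fa[OF a01]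
    have S: "ev M Y borel \<union> sets G1 \<subseteq> sets M" using evY subG1 unfolding subalgebra_def by blast
    have hm: "(\<lambda>\<omega>. I a \<omega> * Y \<omega>) \<in> borel_measurable (gen M (ev M Y borel \<union> sets G1))"
    proof -
      have "A \<in> borel_measurable (gen M (ev M Y borel \<union> sets G1))"
        by (rule meas_gen[OF _ S Am AG1]) blast
      then have "I a \<in> borel_measurable (gen M (ev M Y borel \<union> sets G1))"
        unfolding I_def by (rule ind_meas) simp
      moreover have "Y \<in> borel_measurable (gen M (ev M Y borel \<union> sets G1))"
        by (rule meas_gen[OF _ S Ym order_refl]) blast
      ultimately show ?thesis by measurable
    qed
    have IY2: "integrable M (\<lambda>\<omega>. (I a \<omega> * Y \<omega>)\<^sup>2)"
    proof (rule integrable_dom[OF Y2])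
      fix \<omega> show "\<bar>(I a \<omega> * Y \<omega>)\<^sup>2\<bar> \<le> \<bar>(Y \<omega>)\<^sup>2\<bar>"
        using I01[of a \<omega>] by (cases "I a \<omega> = 0") auto
    qed measurable
    have hint: "integrable M (\<lambda>\<omega>. (I a \<omega> * Y \<omega>) * Q' \<omega>)"
      by (rule L2_prod[OF _ Q'm IY2 Q'2]) measurable
    have "(\<integral>\<omega>. (I a \<omega> * Y \<omega>) * Q' \<omega> \<partial>M) = (\<integral>\<omega>. (I a \<omega> * Y \<omega>) * real_cond_exp M G1 Q' \<omega> \<partial>M)"
      by (rule ci_prod[OF subG1 ciY ZN evY Q'i Q'G1 hm hint])
    also have "\<dots> = (\<integral>\<omega>. Ya \<omega> * (I a \<omega> / p0 a \<omega>) \<partial>M)"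
    proof (rule integral_cong_AE)
      show "AE \<omega> in M. I a \<omega> * Y \<omega> * real_cond_exp M G1 Q' \<omega> = Ya \<omega> * (I a \<omega> / p0 a \<omega>)"
        using conjunct1[OF F] cons AE_space
      proof eventually_elim
        case (elim \<omega>)
        show ?case
        proof (cases "A \<omega> = a")
          case True
          then have "I a \<omega> = 1" unfolding I_def using elim by (auto simp: indicator_def)
          moreover have "\<omega> \<in> space M" using elim by simp
          ultimately show ?thesis using elim True unfolding r1_def by (metis mult.commute mult.left_neutral)
        next
          case False
          then have "I a \<omega> = 0" unfolding I_def by (auto simp: indicator_def)
          then show ?thesis by simp
        qed
      qed
      show "(\<lambda>\<omega>. I a \<omega> * Y \<omega> * real_cond_exp M G1 Q' \<omega>) \<in> borel_measurable M"
        using r1m(1) unfolding r1_def by measurable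
      show "(\<lambda>\<omega>. Ya \<omega> * (I a \<omega> / p0 a \<omega>)) \<in> borel_measurable M" by measurable
    qed
    also have "\<dots> = (\<integral>\<omega>. Ya \<omega> * real_cond_exp M G0 (\<lambda>\<omega>. I a \<omega> / p0 a \<omega>) \<omega> \<partial>M)"
    proof (rule ci_prod[OF subG0 ciA evA ev_sub[OF Yam]])
      show "integrable M (\<lambda>\<omega>. I a \<omega> / p0 a \<omega>)" using F by blast
      show "(\<lambda>\<omega>. I a \<omega> / p0 a \<omega>) \<in> borel_measurable (gen M (ev M A borel \<union> sets G0))" using F by blast
      show "Ya \<in> borel_measurable (gen M (ev M Ya borel \<union> sets G0))"
        by (rule meas_gen[OF _ _ Yam order_refl]) (use ev_sub[OF Yam] subG0 in \<open>auto simp: subalgebra_def\<close>)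
      show "integrable M (\<lambda>\<omega>. Ya \<omega> * (I a \<omega> / p0 a \<omega>))"
        by (rule L2_prod[OF Yam _ Ya2]) (use F in auto)
    qed
    also have "\<dots> = (\<integral>\<omega>. Ya \<omega> \<partial>M)"
      using F by (intro integral_cong_AE) auto
    finally show ?thesis .
  qed
  have pw: "qq (Z \<omega>, 1, X \<omega>) * A \<omega> * Y \<omega> - qq (Z \<omega>, 0, X \<omega>) * (1 - A \<omega>) * Y \<omega>
      = (I 1 \<omega> * Y \<omega>) * qq (Z \<omega>, A \<omega>, X \<omega>) - (I 0 \<omega> * Y \<omega>) * qq (Z \<omega>, A \<omega>, X \<omega>)"
    if "\<omega> \<in> space M" for qq :: "(nat \<Rightarrow> 'z) \<times> real \<times> 'x \<Rightarrow> real" and \<omega>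
  proof -
    have "A \<omega> = 0 \<or> A \<omega> = 1" using A01 that by auto
    then show ?thesis using that unfolding I_def by (auto simp: indicator_def)
  qed
  have hintg: "integrable M (\<lambda>\<omega>. (I a \<omega> * Y \<omega>) * Q' \<omega>)" for a
  proof -
    have IY2: "integrable M (\<lambda>\<omega>. (I a \<omega> * Y \<omega>)\<^sup>2)"
    proof (rule integrable_dom[OF Y2])
      fix \<omega> show "\<bar>(I a \<omega> * Y \<omega>)\<^sup>2\<bar> \<le> \<bar>(Y \<omega>)\<^sup>2\<bar>"
        using I01[of a \<omega>] by (cases "I a \<omega> = 0") auto
    qed measurable
    show ?thesis by (rule L2_prod[OF _ Q'm IY2 Q'2]) measurable
  qed
  have Y1i: "integrable M Y1" by (rule L2_L1[OF Y1m Y1sq])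
  have Y0i: "integrable M Y0" by (rule L2_L1[OF Y0m Y0sq])
  have tau1: "(\<integral>\<omega>. (I 1 \<omega> * Y \<omega>) * Q' \<omega> \<partial>M) = (\<integral>\<omega>. Y1 \<omega> \<partial>M)"
    by (rule tau[OF _ ci1 Y1m Y1sq]) (use consistency in auto)
  have tau0: "(\<integral>\<omega>. (I 0 \<omega> * Y \<omega>) * Q' \<omega> \<partial>M) = (\<integral>\<omega>. Y0 \<omega> \<partial>M)"
    by (rule tau[OF _ ci0 Y0m Y0sq]) (use consistency in auto)
  have part1a: "(\<integral>\<omega>. Y1 \<omega> - Y0 \<omega> \<partial>M)
     = (\<integral>\<omega>. q' (Z \<omega>, 1, X \<omega>) * A \<omega> * Y \<omega> - q' (Z \<omega>, 0, X \<omega>) * (1 - A \<omega>) * Y \<omega> \<partial>M)"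
  proof -
    have "(\<integral>\<omega>. q' (Z \<omega>, 1, X \<omega>) * A \<omega> * Y \<omega> - q' (Z \<omega>, 0, X \<omega>) * (1 - A \<omega>) * Y \<omega> \<partial>M)
        = (\<integral>\<omega>. (I 1 \<omega> * Y \<omega>) * Q' \<omega> - (I 0 \<omega> * Y \<omega>) * Q' \<omega> \<partial>M)"
      by (rule Bochner_Integration.integral_cong) (auto simp: pw Q'_def)
    also have "\<dots> = (\<integral>\<omega>. (I 1 \<omega> * Y \<omega>) * Q' \<omega> \<partial>M) - (\<integral>\<omega>. (I 0 \<omega> * Y \<omega>) * Q' \<omega> \<partial>M)"
      by (rule Bochner_Integration.integral_diff[OF hintg hintg])
    also have "\<dots> = (\<integral>\<omega>. Y1 \<omega> - Y0 \<omega> \<partial>M)"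
      unfolding tau1 tau0 by (rule Bochner_Integration.integral_diff[OF Y1i Y0i, symmetric])
    finally show ?thesis ..
  qed
  have HP1: "ev M W MW \<union> ev M X MX \<subseteq> Pow (space M)" using evW evX sets.sets_into_space by blast
  have HP2: "ev M W MW \<union> ev M A borel \<union> ev M X MX \<subseteq> Pow (space M)" using evW evA evX sets.sets_into_space by blast
  have HS1: "ev M W MW \<union> ev M X MX \<subseteq> sets M" using evW evX by blast
  have HS2: "ev M W MW \<union> ev M A borel \<union> ev M X MX \<subseteq> sets M" using evW evA evX by blast
  have HAeq: "sets HA = sigma_sets (space M) (ev M A borel \<union> sets H)"
    unfolding HA_def sets_gen[OF HP2]
  proof (rule sigma_sets_eqI)
    fix a assume "a \<in> ev M W MW \<union> ev M A borel \<union> ev M X MX"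
    moreover have "ev M W MW \<union> ev M X MX \<subseteq> sets H" unfolding H_def by (rule gen_basic[OF HS1]) blast
    ultimately show "a \<in> sigma_sets (space M) (ev M A borel \<union> sets H)" by blast
  next
    fix b assume b: "b \<in> ev M A borel \<union> sets H"
    have "sets H \<subseteq> sigma_sets (space M) (ev M W MW \<union> ev M A borel \<union> ev M X MX)"
      unfolding H_def sets_gen[OF HP1] by (rule sigma_sets_mono') blast
    then show "b \<in> sigma_sets (space M) (ev M W MW \<union> ev M A borel \<union> ev M X MX)" using b by blast
  qed
  define pH where "pH = (\<lambda>a::real. cprob M H {x \<in> space M. A x = a})"
  have pHI: "pH a = real_cond_exp M H (I a)" for a unfolding pH_def I_def cprob_def ..
  have pHm[measurable]: "pH a \<in> borel_measurable H" "pH a \<in> borel_measurable M" for a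
    unfolding pH_def by auto
  have pHHA: "pH a \<in> borel_measurable HA" for a
    by (rule measurable_from_subalg[OF HHA]) (simp add: pHm)
  have pHb: "AE \<omega> in M. 0 \<le> pH a \<omega> \<and> pH a \<omega> \<le> 1" for a
    unfolding pH_def by (rule cprob_bounds[OF subH Isets])
  have AHA: "A \<in> borel_measurable HA"
    unfolding HA_def by (rule meas_gen[OF _ HS2 Am order_refl]) blast
  have IHA: "I a \<in> borel_measurable HA" for a unfolding I_def
    by (rule ind_meas[OF AHA]) (simp add: HA_def)
  have AG1m: "A \<in> borel_measurable G1"
    unfolding G1_def F_UAZX_def by (rule meas_gen[OF _ G1S Am order_refl]) blast
  have IG1: "I a \<in> borel_measurable G1" for a unfolding I_def
    by (rule ind_meas[OF AG1m]) (simp add: G1_def F_UAZX_def)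
  have IQ'i: "integrable M (\<lambda>\<omega>. I a \<omega> * Q' \<omega>)" for a
  proof (rule integrable_dom[OF Q'i])
    fix \<omega> show "\<bar>I a \<omega> * Q' \<omega>\<bar> \<le> \<bar>Q' \<omega>\<bar>"
      using I01[of a \<omega>] by (cases "I a \<omega> = 0") auto
  qed measurable
  have E0: "AE \<omega> in M. real_cond_exp M G0 (\<lambda>\<omega>. I a \<omega> * Q' \<omega>) \<omega> = 1" if a01: "a \<in> {0, 1}" for a
  proof -
    note F = fa[OF a01]
    have n1: "AE \<omega> in M. real_cond_exp M G0 (real_cond_exp M G1 (\<lambda>\<omega>. I a \<omega> * Q' \<omega>)) \<omega> = real_cond_exp M G0 (\<lambda>\<omega>. I a \<omega> * Q' \<omega>) \<omega>"
      by (rule sG0.real_cond_exp_nested_subalg[OF subG1 G0G1 IQ'i])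
    have n2: "AE \<omega> in M. real_cond_exp M G1 (\<lambda>\<omega>. I a \<omega> * Q' \<omega>) \<omega> = I a \<omega> * r1 \<omega>"
      unfolding r1_def by (rule sG1.real_cond_exp_mult[OF IG1 Q'm IQ'i])
    have n4: "AE \<omega> in M. real_cond_exp M G0 (real_cond_exp M G1 (\<lambda>\<omega>. I a \<omega> * Q' \<omega>)) \<omega> = real_cond_exp M G0 (\<lambda>\<omega>. I a \<omega> / p0 a \<omega>) \<omega>"
    proof (rule sG0.real_cond_exp_cong)
      show "AE \<omega> in M. real_cond_exp M G1 (\<lambda>\<omega>. I a \<omega> * Q' \<omega>) \<omega> = I a \<omega> / p0 a \<omega>"
        using n2 conjunct1[OF F] by eventually_elim simp
      show "real_cond_exp M G1 (\<lambda>\<omega>. I a \<omega> * Q' \<omega>) \<in> borel_measurable M" by simp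
      show "(\<lambda>\<omega>. I a \<omega> / p0 a \<omega>) \<in> borel_measurable M" by measurable
    qed
    show ?thesis using n1 n4 F by auto
  qed
  have ciW': "cond_indep M G0 (Zev M Z MZ \<nu>s \<union> ev M A borel) (ev M W MW)" by (rule cond_indep_sym[OF ciW])
  have SZA: "Zev M Z MZ \<nu>s \<union> ev M A borel \<subseteq> sets M" using ZN evA by blast
  have SZA': "Zev M Z MZ \<nu>s \<union> ev M A borel \<union> sets G0 \<subseteq> sets M" using ZN evA subG0 unfolding subalgebra_def by blast
  have IQ'm: "(\<lambda>\<omega>. I a \<omega> * Q' \<omega>) \<in> borel_measurable (gen M (Zev M Z MZ \<nu>s \<union> ev M A borel \<union> sets G0))" for a
  proof -
    have "Z \<in> measurable (gen M (Zev M Z MZ \<nu>s \<union> ev M A borel \<union> sets G0)) (MZK MZ K)"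
      by (rule Zmeas_gen[OF SZA' Zm]) (use Zsplit ZG0 in blast)
    moreover have Am': "A \<in> borel_measurable (gen M (Zev M Z MZ \<nu>s \<union> ev M A borel \<union> sets G0))"
      by (rule meas_gen[OF _ SZA' Am order_refl]) blast
    moreover have "X \<in> measurable (gen M (Zev M Z MZ \<nu>s \<union> ev M A borel \<union> sets G0)) MX"
      by (rule meas_gen[OF _ SZA' Xm AG0]) blast
    ultimately have "Q' \<in> borel_measurable (gen M (Zev M Z MZ \<nu>s \<union> ev M A borel \<union> sets G0))"
      unfolding Q'_def using q'm[unfolded NN_def] by (rule meas_comp3)
    moreover have "I a \<in> borel_measurable (gen M (Zev M Z MZ \<nu>s \<union> ev M A borel \<union> sets G0))"
      unfolding I_def by (rule ind_meas[OF Am']) simp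
    ultimately show ?thesis by measurable
  qed
  have KEY: "AE \<omega> in M. real_cond_exp M H (\<lambda>\<omega>. I a \<omega> * Q' \<omega>) \<omega> = 1" if a01: "a \<in> {0, 1}" for a
  proof (rule sH.real_cond_exp_charact)
    show "integrable M (\<lambda>\<omega>. I a \<omega> * Q' \<omega>)" by (rule IQ'i)
    show "integrable M (\<lambda>\<omega>. 1::real)" by simp
    show "(\<lambda>\<omega>. 1::real) \<in> borel_measurable H" by simp
    fix B assume B: "B \<in> sets H"
    have BM: "B \<in> sets M" using B subH by (rule sub_sets[rotated])
    have BG: "B \<in> sets (gen M (ev M W MW \<union> sets G0))"
    proof -
      have P3: "ev M W MW \<union> sets G0 \<subseteq> Pow (space M)" using evW subG0 sets.sets_into_space unfolding subalgebra_def by blast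
      have "sets H \<subseteq> sets (gen M (ev M W MW \<union> sets G0))"
        unfolding H_def sets_gen[OF HP1] sets_gen[OF P3] by (rule sigma_sets_mono') (use AG0 in blast)
      then show ?thesis using B by blast
    qed
    have "(LINT \<omega>:B|M. I a \<omega> * Q' \<omega>) = (\<integral>\<omega>. indicator B \<omega> * (I a \<omega> * Q' \<omega>) \<partial>M)"
      unfolding set_lebesgue_integral_def by simp
    also have "\<dots> = (\<integral>\<omega>. indicator B \<omega> * real_cond_exp M G0 (\<lambda>\<omega>. I a \<omega> * Q' \<omega>) \<omega> \<partial>M)"
    proof (rule ci_prod[OF subG0 ciW' SZA evW IQ'i])
      show "(\<lambda>\<omega>. I a \<omega> * Q' \<omega>) \<in> borel_measurable (gen M (Zev M Z MZ \<nu>s \<union> ev M A borel \<union> sets G0))" by (rule IQ'm)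
      show "indicator B \<in> borel_measurable (gen M (ev M W MW \<union> sets G0))" using BG by simp
      show "integrable M (\<lambda>\<omega>. indicator B \<omega> * (I a \<omega> * Q' \<omega>))" by (rule integrable_ind_mult[OF IQ'i BM])
    qed
    also have "\<dots> = (\<integral>\<omega>. indicator B \<omega> * 1 \<partial>M)"
      using E0[OF a01] BM by (intro integral_cong_AE) (auto intro!: borel_measurable_times borel_measurable_indicator)
    also have "\<dots> = (LINT \<omega>:B|M. 1)"
      unfolding set_lebesgue_integral_def by simp
    finally show "(LINT \<omega>:B|M. I a \<omega> * Q' \<omega>) = (LINT \<omega>:B|M. 1)" .
  qed
  have pHQ'i: "integrable M (\<lambda>\<omega>. g \<omega> * pH a \<omega> * Q' \<omega>)"
    if gm: "g \<in> borel_measurable M" and gb: "\<And>\<omega>. \<bar>g \<omega>\<bar> \<le> 1" for a g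
  proof (rule integrable_dom_AE[OF Q'i])
    show "(\<lambda>\<omega>. g \<omega> * pH a \<omega> * Q' \<omega>) \<in> borel_measurable M" using gm by measurable
    show "AE \<omega> in M. \<bar>g \<omega> * pH a \<omega> * Q' \<omega>\<bar> \<le> \<bar>Q' \<omega>\<bar>"
      using pHb[of a]
    proof eventually_elim
      case (elim \<omega>)
      have "\<bar>g \<omega> * pH a \<omega>\<bar> \<le> 1" using gb[of \<omega>] elim by (auto simp: abs_mult intro: mult_le_one)
      then show ?case by (simp add: abs_mult mult_left_le_one_le)
    qed
  qed
  have BAS: "(\<integral>\<omega>. indicator B \<omega> * (I a \<omega> * pH a \<omega> * Q' \<omega>) \<partial>M) = (\<integral>\<omega>. indicator B \<omega> * I a \<omega> \<partial>M)"
    if a01: "a \<in> {0, 1}" and B: "B \<in> sets H" for a B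
  proof -
    have BM: "B \<in> sets M" using B subH by (rule sub_sets[rotated])
    have "(\<integral>\<omega>. indicator B \<omega> * (I a \<omega> * pH a \<omega> * Q' \<omega>) \<partial>M) = (\<integral>\<omega>. (indicator B \<omega> * pH a \<omega>) * (I a \<omega> * Q' \<omega>) \<partial>M)"
      by (simp add: ac_simps)
    also have "\<dots> = (\<integral>\<omega>. (indicator B \<omega> * pH a \<omega>) * real_cond_exp M H (\<lambda>\<omega>. I a \<omega> * Q' \<omega>) \<omega> \<partial>M)"
    proof (rule sH.real_cond_exp_intg(2)[symmetric])
      have "integrable M (\<lambda>\<omega>. (indicator B \<omega> * I a \<omega>) * pH a \<omega> * Q' \<omega>)"
        by (rule pHQ'i) (use BM Iabs in \<open>auto simp: indicator_def\<close>)
      then show "integrable M (\<lambda>\<omega>. indicator B \<omega> * pH a \<omega> * (I a \<omega> * Q' \<omega>))" by (simp add: ac_simps)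
      show "(\<lambda>\<omega>. indicator B \<omega> * pH a \<omega>) \<in> borel_measurable H" using B by measurable
      show "(\<lambda>\<omega>. I a \<omega> * Q' \<omega>) \<in> borel_measurable M" by measurable
    qed
    also have "\<dots> = (\<integral>\<omega>. indicator B \<omega> * real_cond_exp M H (I a) \<omega> \<partial>M)"
    proof (rule integral_cong_AE)
      show "AE \<omega> in M. indicator B \<omega> * pH a \<omega> * real_cond_exp M H (\<lambda>\<omega>. I a \<omega> * Q' \<omega>) \<omega> = indicator B \<omega> * real_cond_exp M H (I a) \<omega>"
        using KEY[OF a01] by eventually_elim (simp add: pHI)
      show "(\<lambda>\<omega>. indicator B \<omega> * pH a \<omega> * real_cond_exp M H (\<lambda>\<omega>. I a \<omega> * Q' \<omega>) \<omega>) \<in> borel_measurable M"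
        using BM by measurable
      show "(\<lambda>\<omega>. indicator B \<omega> * real_cond_exp M H (I a) \<omega>) \<in> borel_measurable M"
        using BM by measurable
    qed
    also have "\<dots> = (\<integral>\<omega>. indicator B \<omega> * I a \<omega> \<partial>M)"
    proof (rule sH.real_cond_exp_intg(2))
      show "integrable M (\<lambda>\<omega>. indicator B \<omega> * I a \<omega>)" by (rule integrable_ind_mult[OF _ BM]) (simp add: I_def Isets)
      show "indicator B \<in> borel_measurable H" using B by simp
      show "I a \<in> borel_measurable M" by simp
    qed
    finally show ?thesis .
  qed
  have DYN: "(LINT \<omega>:C|M. I a \<omega> * pH a \<omega> * Q' \<omega>) = (LINT \<omega>:C|M. I a \<omega>)"
    if a01: "a \<in> {0, 1}" and C: "C \<in> sets HA" for a C
  proof (rule set_int_eq_sigma[OF pis_props(1)[OF subH evA] pis_props(2)[OF subH evA]])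
    show "integrable M (\<lambda>\<omega>. I a \<omega> * pH a \<omega> * Q' \<omega>)"
      by (rule pHQ'i) (use Iabs in auto)
    show "integrable M (I a)" by (simp add: I_def Isets)
    show "C \<in> sigma_sets (space M) (pis (ev M A borel) H)"
      using C HAeq pis_props(3)[OF subH evA] by simp
    have sH': "space M \<in> sets H" using subH unfolding subalgebra_def by (metis sets.top)
    have "(\<integral>\<omega>. I a \<omega> * pH a \<omega> * Q' \<omega> \<partial>M) = (\<integral>\<omega>. indicator (space M) \<omega> * (I a \<omega> * pH a \<omega> * Q' \<omega>) \<partial>M)"
      by (rule Bochner_Integration.integral_cong) auto
    also have "\<dots> = (\<integral>\<omega>. indicator (space M) \<omega> * I a \<omega> \<partial>M)" by (rule BAS[OF a01 sH'])
    also have "\<dots> = (\<integral>\<omega>. I a \<omega> \<partial>M)" by (rule Bochner_Integration.integral_cong) auto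
    finally show "(\<integral>\<omega>. I a \<omega> * pH a \<omega> * Q' \<omega> \<partial>M) = (\<integral>\<omega>. I a \<omega> \<partial>M)" .
    fix D assume "D \<in> pis (ev M A borel) H"
    then obtain E B where D: "D = E \<inter> B" and E: "E \<in> sigma_sets (space M) (ev M A borel)" and B: "B \<in> sets H"
      unfolding pis_def by blast
    show "(LINT \<omega>:D|M. I a \<omega> * pH a \<omega> * Q' \<omega>) = (LINT \<omega>:D|M. I a \<omega>)"
      using dich[OF E, of a]
    proof
      assume in1: "\<forall>\<omega>\<in>space M. A \<omega> = a \<longrightarrow> \<omega> \<in> E"
      have eq: "indicator D \<omega> * I a \<omega> = indicator B \<omega> * I a \<omega>" if "\<omega> \<in> space M" for \<omega>
        using in1 that unfolding D I_def by (auto simp: indicator_def)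
      have "(LINT \<omega>:D|M. I a \<omega> * pH a \<omega> * Q' \<omega>) = (\<integral>\<omega>. indicator B \<omega> * (I a \<omega> * pH a \<omega> * Q' \<omega>) \<partial>M)"
        unfolding set_lebesgue_integral_def
        by (rule Bochner_Integration.integral_cong) (use eq in \<open>auto simp: mult.assoc[symmetric]\<close>)
      also have "\<dots> = (\<integral>\<omega>. indicator B \<omega> * I a \<omega> \<partial>M)" by (rule BAS[OF a01 B])
      also have "\<dots> = (LINT \<omega>:D|M. I a \<omega>)"
        unfolding set_lebesgue_integral_def
        by (rule Bochner_Integration.integral_cong) (simp_all only: real_scaleR_def eq)
      finally show ?thesis .
    next
      assume in0: "\<forall>\<omega>\<in>space M. A \<omega> = a \<longrightarrow> \<omega> \<notin> E"
      have eq: "indicator D \<omega> * I a \<omega> = 0" if "\<omega> \<in> space M" for \<omega>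
        using in0 that unfolding D I_def by (auto simp: indicator_def)
      have "(LINT \<omega>:D|M. I a \<omega> * pH a \<omega> * Q' \<omega>) = (\<integral>\<omega>. 0 \<partial>M)"
        unfolding set_lebesgue_integral_def
        by (rule Bochner_Integration.integral_cong) (use eq in \<open>auto simp: mult.assoc[symmetric]\<close>)
      also have "\<dots> = (LINT \<omega>:D|M. I a \<omega>)"
        unfolding set_lebesgue_integral_def
        by (rule Bochner_Integration.integral_cong) (use eq in auto)
      finally show ?thesis .
    qed
  qed
  define r where "r = real_cond_exp M HA Q'"
  have rm[measurable]: "r \<in> borel_measurable M" "r \<in> borel_measurable HA" unfolding r_def by auto
  have ri: "integrable M r" unfolding r_def by (rule sHA.real_cond_exp_int(1)[OF Q'i])
  have PHI: "AE \<omega> in M. A \<omega> = a \<longrightarrow> r \<omega> * pH a \<omega> = 1" if a01: "a \<in> {0, 1}" for a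
  proof -
    define \<phi> where "\<phi> = (\<lambda>\<omega>. I a \<omega> * pH a \<omega> * r \<omega> - I a \<omega>)"
    have Ii: "integrable M (I a)" by (simp add: I_def Isets)
    have i1: "integrable M (\<lambda>\<omega>. g \<omega> * pH a \<omega> * r \<omega>)"
      if gm: "g \<in> borel_measurable M" and gb: "\<And>\<omega>. \<bar>g \<omega>\<bar> \<le> 1" for g
    proof (rule integrable_dom_AE[OF ri])
      show "(\<lambda>\<omega>. g \<omega> * pH a \<omega> * r \<omega>) \<in> borel_measurable M" using gm by measurable
      show "AE \<omega> in M. \<bar>g \<omega> * pH a \<omega> * r \<omega>\<bar> \<le> \<bar>r \<omega>\<bar>"
        using pHb[of a]
      proof eventually_elim
        case (elim \<omega>)
        have "\<bar>g \<omega> * pH a \<omega>\<bar> \<le> 1" using gb[of \<omega>] elim by (auto simp: abs_mult intro: mult_le_one)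
        then show ?case by (simp add: abs_mult mult_left_le_one_le)
      qed
    qed
    have \<phi>i: "integrable M \<phi>" unfolding \<phi>_def
      by (rule Bochner_Integration.integrable_diff[OF i1 Ii]) (use Iabs in auto)
    have \<phi>m: "\<phi> \<in> borel_measurable HA" unfolding \<phi>_def using IHA pHHA by measurable
    have c0: "AE \<omega> in M. real_cond_exp M HA \<phi> \<omega> = 0"
    proof (rule sHA.real_cond_exp_charact)
      fix C assume C: "C \<in> sets HA"
      have CM: "C \<in> sets M" using C subHA by (rule sub_sets[rotated])
      have gC: "(\<lambda>\<omega>. indicator C \<omega> * I a \<omega>) \<in> borel_measurable M" using CM by measurable
      have gCb: "\<bar>indicator C \<omega> * I a \<omega>\<bar> \<le> 1" for \<omega> using Iabs[of a \<omega>] by (auto simp: indicator_def)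
      have "(LINT \<omega>:C|M. \<phi> \<omega>) = (\<integral>\<omega>. indicator C \<omega> * I a \<omega> * pH a \<omega> * r \<omega> - indicator C \<omega> * I a \<omega> \<partial>M)"
        unfolding set_lebesgue_integral_def \<phi>_def by (simp add: algebra_simps)
      also have "\<dots> = (\<integral>\<omega>. indicator C \<omega> * I a \<omega> * pH a \<omega> * r \<omega> \<partial>M) - (\<integral>\<omega>. indicator C \<omega> * I a \<omega> \<partial>M)"
        by (rule Bochner_Integration.integral_diff[OF i1[OF gC gCb]]) (rule integrable_ind_mult[OF Ii CM])
      also have "(\<integral>\<omega>. indicator C \<omega> * I a \<omega> * pH a \<omega> * r \<omega> \<partial>M) = (\<integral>\<omega>. indicator C \<omega> * I a \<omega> * pH a \<omega> * Q' \<omega> \<partial>M)"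
        unfolding r_def
      proof (rule sHA.real_cond_exp_intg(2))
        show "integrable M (\<lambda>\<omega>. indicator C \<omega> * I a \<omega> * pH a \<omega> * Q' \<omega>)" by (rule pHQ'i[OF gC gCb])
        show "(\<lambda>\<omega>. indicator C \<omega> * I a \<omega> * pH a \<omega>) \<in> borel_measurable HA"
          using C IHA pHHA by measurable
        show "Q' \<in> borel_measurable M" by simp
      qed
      also have "\<dots> = (LINT \<omega>:C|M. I a \<omega> * pH a \<omega> * Q' \<omega>)"
        unfolding set_lebesgue_integral_def by (simp add: ac_simps)
      also have "\<dots> = (LINT \<omega>:C|M. I a \<omega>)" by (rule DYN[OF a01 C])
      also have "\<dots> = (\<integral>\<omega>. indicator C \<omega> * I a \<omega> \<partial>M)"
        unfolding set_lebesgue_integral_def by simp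
      finally show "(LINT \<omega>:C|M. \<phi> \<omega>) = (LINT \<omega>:C|M. 0)" by simp
    qed (use \<phi>i in auto)
    have c1: "AE \<omega> in M. real_cond_exp M HA \<phi> \<omega> = \<phi> \<omega>"
      by (rule sHA.real_cond_exp_F_meas[OF \<phi>i \<phi>m])
    show ?thesis using c0 c1 AE_space
    proof eventually_elim
      case (elim \<omega>)
      show ?case
      proof
        assume "A \<omega> = a"
        then have "I a \<omega> = 1" using elim unfolding I_def by (auto simp: indicator_def)
        then show "r \<omega> * pH a \<omega> = 1" using elim unfolding \<phi>_def by (simp add: mult.commute)
      qed
    qed
  qed
  have PHI0: "AE \<omega> in M. A \<omega> = 0 \<longrightarrow> r \<omega> * pH 0 \<omega> = 1" by (rule PHI) simp
  have PHI1: "AE \<omega> in M. A \<omega> = 1 \<longrightarrow> r \<omega> * pH 1 \<omega> = 1" by (rule PHI) simp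
  have part1b: "AE \<omega> in M. real_cond_exp M HA Q' \<omega> = 1 / propA M H A \<omega>"
    using PHI0 PHI1 A01' AE_space
  proof eventually_elim
    case (elim \<omega>)
    have h: "r \<omega> * pH (A \<omega>) \<omega> = 1" using elim by auto
    then have nz: "pH (A \<omega>) \<omega> \<noteq> 0" by auto
    have "r \<omega> = 1 / pH (A \<omega>) \<omega>" using h nz by (simp add: field_simps)
    moreover have "propA M H A \<omega> = pH (A \<omega>) \<omega>" unfolding propA_def pH_def ..
    ultimately show ?case unfolding r_def by simp
  qed
  have part1b': "AE \<omega> in M.
               real_cond_exp M (gen M (ev M W MW \<union> ev M A borel \<union> ev M X MX)) (\<lambda>\<omega>. q' (Z \<omega>, A \<omega>, X \<omega>)) \<omega>
                 = 1 / propA M (gen M (ev M W MW \<union> ev M X MX)) A \<omega>"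
    using part1b unfolding HA_def H_def Q'_def .
  have WHA: "W \<in> measurable HA MW"
    unfolding HA_def by (rule meas_gen[OF _ HS2 Wm order_refl]) blast
  have XHA: "X \<in> measurable HA MX"
    unfolding HA_def by (rule meas_gen[OF _ HS2 Xm order_refl]) blast
  show ?thesis
    apply (intro conjI)
      apply (rule part1a)
     apply (rule part1b')
    apply (rule impI, rule allI, rule impI)
    subgoal premises prems for q
    proof -
      have qH: "(\<lambda>(z, a, x). signA a * q (z, a, x)) \<in> Hgam M Z MZ K A X MX \<gamma>"
        and qbr: "AE \<omega> in M. real_cond_exp M (gen M (ev M W MW \<union> ev M A borel \<union> ev M X MX)) (\<lambda>\<omega>. q (Z \<omega>, A \<omega>, X \<omega>)) \<omega>
                        = 1 / propA M (gen M (ev M W MW \<union> ev M X MX)) A \<omega>"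
        using prems(2) by auto
      define Q where "Q = (\<lambda>\<omega>. q (Z \<omega>, A \<omega>, X \<omega>))"
      have dq: "(\<lambda>(z, a, x). signA a * q (z, a, x)) \<in> borel_measurable NN"
        and dq2: "integrable M (\<lambda>\<omega>. ((\<lambda>(z, a, x). signA a * q (z, a, x)) (Z \<omega>, A \<omega>, X \<omega>))\<^sup>2)"
        using qH unfolding Hgam_def L2fun_def NN_def by auto
      have qm[measurable]: "q \<in> borel_measurable NN" using meas_q dq unfolding NN_def by blast
      have Qm[measurable]: "Q \<in> borel_measurable M" unfolding Q_def NN_def using qm[unfolded NN_def] by measurable
      have Q2: "integrable M (\<lambda>\<omega>. (Q \<omega>)\<^sup>2)"
      proof -
        have "(\<lambda>\<omega>. ((\<lambda>(z, a, x). signA a * q (z, a, x)) (Z \<omega>, A \<omega>, X \<omega>))\<^sup>2) = (\<lambda>\<omega>. (Q \<omega>)\<^sup>2)"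
          unfolding Q_def by (rule ext) (simp add: power_mult_distrib power2_eq_square[of "signA _"] signA_sq)
        then show ?thesis using dq2 by simp
      qed
      have Qi: "integrable M Q" by (rule L2_L1[OF Qm Q2])
      have D2: "integrable M (\<lambda>\<omega>. (Q \<omega> - Q' \<omega>)\<^sup>2)"
      proof (rule integrable_dom)
        show "integrable M (\<lambda>\<omega>. 2 * (Q \<omega>)\<^sup>2 + 2 * (Q' \<omega>)\<^sup>2)" using Q2 Q'2 by auto
        show "(\<lambda>\<omega>. (Q \<omega> - Q' \<omega>)\<^sup>2) \<in> borel_measurable M" by measurable
        fix \<omega>
        have "(Q \<omega> - Q' \<omega>)\<^sup>2 \<le> 2 * (Q \<omega>)\<^sup>2 + 2 * (Q' \<omega>)\<^sup>2"
        proof -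
          have "0 \<le> (Q \<omega> + Q' \<omega>)\<^sup>2" by simp
          then show ?thesis unfolding power2_diff power2_sum by linarith
        qed
        then show "\<bar>(Q \<omega> - Q' \<omega>)\<^sup>2\<bar> \<le> \<bar>2 * (Q \<omega>)\<^sup>2 + 2 * (Q' \<omega>)\<^sup>2\<bar>" by simp
      qed
      define g where "g = (\<lambda>(z, a, x). signA a * (q (z, a, x) - q' (z, a, x)))"
      have gZ: "g (Z \<omega>, A \<omega>, X \<omega>) = signA (A \<omega>) * (Q \<omega> - Q' \<omega>)" for \<omega>
        unfolding g_def Q_def Q'_def by simp
      have gdiff: "g (Z \<omega>, A \<omega>, X \<omega>) = (\<lambda>(z, a, x). signA a * q (z, a, x)) (Z \<omega>, A \<omega>, X \<omega>)
          - (\<lambda>(z, a, x). signA a * q' (z, a, x)) (Z \<omega>, A \<omega>, X \<omega>)" for \<omega>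
        unfolding g_def by (simp add: right_diff_distrib)
      have dqi: "integrable M (\<lambda>\<omega>. (\<lambda>(z, a, x). signA a * q (z, a, x)) (Z \<omega>, A \<omega>, X \<omega>))"
        by (rule L2_L1[OF _ dq2]) (use dq[unfolded NN_def] in measurable)
      have dq'i: "integrable M (\<lambda>\<omega>. (\<lambda>(z, a, x). signA a * q' (z, a, x)) (Z \<omega>, A \<omega>, X \<omega>))"
        by (rule L2_L1[OF _ dq'2]) (use dq'[unfolded NN_def] in measurable)
      have gH: "g \<in> Hgam M Z MZ K A X MX \<gamma>"
        unfolding Hgam_def L2fun_def
      proof (intro CollectI conjI allI impI)
        have e: "g = (\<lambda>p. (\<lambda>(z, a, x). signA a * q (z, a, x)) p - (\<lambda>(z, a, x). signA a * q' (z, a, x)) p)"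
          unfolding g_def by (auto simp: fun_eq_iff right_diff_distrib)
        have "(\<lambda>p. (\<lambda>(z, a, x). signA a * q (z, a, x)) p - (\<lambda>(z, a, x). signA a * q' (z, a, x)) p) \<in> borel_measurable NN"
          by (rule borel_measurable_diff[OF dq dq'])
        then show "g \<in> borel_measurable (MZK MZ K \<Otimes>\<^sub>M (borel \<Otimes>\<^sub>M MX))"
          unfolding e NN_def .
        show "integrable M (\<lambda>\<omega>. (g (Z \<omega>, A \<omega>, X \<omega>))\<^sup>2)"
          unfolding gZ using D2 by (simp add: power_mult_distrib power2_eq_square[of "signA _"] signA_sq)
        fix \<nu> assume \<nu>: "\<nu> \<subseteq> {1..K} \<and> card \<nu> = \<gamma>"
        have S\<nu>: "Zev M Z MZ ({1..K} - \<nu>) \<union> ev M X MX \<subseteq> sets M"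
          using Zev_sub[OF Zm, of "{1..K} - \<nu>"] evX by blast
        interpret s\<nu>: sigma_finite_subalgebra M "gen M (Zev M Z MZ ({1..K} - \<nu>) \<union> ev M X MX)"
          by (rule sfs[OF sub_gen[OF S\<nu>]])
        have a1: "AE \<omega> in M. real_cond_exp M (gen M (Zev M Z MZ ({1..K} - \<nu>) \<union> ev M X MX))
            (\<lambda>\<omega>. (\<lambda>(z, a, x). signA a * q (z, a, x)) (Z \<omega>, A \<omega>, X \<omega>)) \<omega> = 0"
          using qH \<nu> unfolding Hgam_def by blast
        have a2: "AE \<omega> in M. real_cond_exp M (gen M (Zev M Z MZ ({1..K} - \<nu>) \<union> ev M X MX))
            (\<lambda>\<omega>. (\<lambda>(z, a, x). signA a * q' (z, a, x)) (Z \<omega>, A \<omega>, X \<omega>)) \<omega> = 0"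
          using q'H \<nu> unfolding Hgam_def by blast
        note a3 = s\<nu>.real_cond_exp_diff[OF dqi dq'i]
        show "AE \<omega> in M. real_cond_exp M (gen M (Zev M Z MZ ({1..K} - \<nu>) \<union> ev M X MX)) (\<lambda>\<omega>. g (Z \<omega>, A \<omega>, X \<omega>)) \<omega> = 0"
          using a1 a2 a3 unfolding gdiff by eventually_elim simp
      qed
      have orth: "\<forall>h\<in>L2fun M (\<lambda>\<omega>. (W \<omega>, A \<omega>, X \<omega>)) (MW \<Otimes>\<^sub>M (borel \<Otimes>\<^sub>M MX)).
                  integral\<^sup>L M (\<lambda>\<omega>. h (W \<omega>, A \<omega>, X \<omega>) * g (Z \<omega>, A \<omega>, X \<omega>)) = 0"
      proof
        fix h assume "h \<in> L2fun M (\<lambda>\<omega>. (W \<omega>, A \<omega>, X \<omega>)) (MW \<Otimes>\<^sub>M (borel \<Otimes>\<^sub>M MX))"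
        then have hm: "h \<in> borel_measurable (MW \<Otimes>\<^sub>M (borel \<Otimes>\<^sub>M MX))"
          and h2: "integrable M (\<lambda>\<omega>. (h (W \<omega>, A \<omega>, X \<omega>))\<^sup>2)" unfolding L2fun_def by auto
        define hs where "hs = (\<lambda>\<omega>. h (W \<omega>, A \<omega>, X \<omega>) * signA (A \<omega>))"
        have hsHA: "hs \<in> borel_measurable HA"
          unfolding hs_def using meas_comp3[OF WHA AHA XHA hm] AHA by measurable
        have hsm: "hs \<in> borel_measurable M" using measurable_from_subalg[OF subHA hsHA] .
        have hs2: "integrable M (\<lambda>\<omega>. (hs \<omega>)\<^sup>2)"
          unfolding hs_def using h2 by (simp add: power_mult_distrib power2_eq_square[of "signA _"] signA_sq)
        have Dm: "(\<lambda>\<omega>. Q \<omega> - Q' \<omega>) \<in> borel_measurable M" by measurable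
        have "(\<integral>\<omega>. h (W \<omega>, A \<omega>, X \<omega>) * g (Z \<omega>, A \<omega>, X \<omega>) \<partial>M) = (\<integral>\<omega>. hs \<omega> * (Q \<omega> - Q' \<omega>) \<partial>M)"
          unfolding gZ hs_def by (simp add: ac_simps)
        also have "\<dots> = (\<integral>\<omega>. hs \<omega> * real_cond_exp M HA (\<lambda>\<omega>. Q \<omega> - Q' \<omega>) \<omega> \<partial>M)"
          by (rule sHA.real_cond_exp_intg(2)[symmetric, OF L2_prod[OF hsm Dm hs2 D2] hsHA Dm])
        also have "\<dots> = (\<integral>\<omega>. 0 \<partial>M)"
        proof (rule integral_cong_AE)
          have e1: "AE \<omega> in M. real_cond_exp M HA (\<lambda>\<omega>. Q \<omega> - Q' \<omega>) \<omega> = real_cond_exp M HA Q \<omega> - real_cond_exp M HA Q' \<omega>"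
            by (rule sHA.real_cond_exp_diff[OF Qi Q'i])
          have e2: "AE \<omega> in M. real_cond_exp M HA Q \<omega> = 1 / propA M H A \<omega>"
            using qbr unfolding HA_def H_def Q_def .
          show "AE \<omega> in M. hs \<omega> * real_cond_exp M HA (\<lambda>\<omega>. Q \<omega> - Q' \<omega>) \<omega> = 0"
            using e1 e2 part1b by eventually_elim simp
          show "(\<lambda>\<omega>. hs \<omega> * real_cond_exp M HA (\<lambda>\<omega>. Q \<omega> - Q' \<omega>) \<omega>) \<in> borel_measurable M"
            using hsm by measurable
        qed simp
        finally show "(\<integral>\<omega>. h (W \<omega>, A \<omega>, X \<omega>) * g (Z \<omega>, A \<omega>, X \<omega>) \<partial>M) = 0" by simp
      qed
      have g0: "AE \<omega> in M. g (Z \<omega>, A \<omega>, X \<omega>) = 0"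
        using prems(1)[rule_format, OF gH] orth by blast
      have QQ: "AE \<omega> in M. Q \<omega> = Q' \<omega>"
        using g0 by eventually_elim (simp add: gZ signA_nz)
      have tauq: "(\<integral>\<omega>. Y1 \<omega> - Y0 \<omega> \<partial>M)
          = (\<integral>\<omega>. q (Z \<omega>, 1, X \<omega>) * A \<omega> * Y \<omega> - q (Z \<omega>, 0, X \<omega>) * (1 - A \<omega>) * Y \<omega> \<partial>M)"
      proof -
        have "(\<integral>\<omega>. q (Z \<omega>, 1, X \<omega>) * A \<omega> * Y \<omega> - q (Z \<omega>, 0, X \<omega>) * (1 - A \<omega>) * Y \<omega> \<partial>M)
            = (\<integral>\<omega>. (I 1 \<omega> * Y \<omega>) * Q \<omega> - (I 0 \<omega> * Y \<omega>) * Q \<omega> \<partial>M)"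
          by (rule Bochner_Integration.integral_cong) (auto simp: pw Q_def)
        also have "\<dots> = (\<integral>\<omega>. (I 1 \<omega> * Y \<omega>) * Q' \<omega> - (I 0 \<omega> * Y \<omega>) * Q' \<omega> \<partial>M)"
          using QQ by (intro integral_cong_AE) auto
        also have "\<dots> = (\<integral>\<omega>. q' (Z \<omega>, 1, X \<omega>) * A \<omega> * Y \<omega> - q' (Z \<omega>, 0, X \<omega>) * (1 - A \<omega>) * Y \<omega> \<partial>M)"
          by (rule Bochner_Integration.integral_cong) (auto simp: pw Q'_def)
        finally show ?thesis using part1a by simp
      qed
      show ?thesis using QQ tauq unfolding Q_def Q'_def by simp
    qed
    done
qed

end
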